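(* Consider the federated $\beta$-stochastic sign SGD process described in the context, run for $T$ iterations, and suppose the lower-bound, smoothness, bounded-true-gradient and Gaussian-noise assumptions hold. Let $B=(1+\epsilon_0)B_0$ with $\epsilon_0>\sigma/B_0$, $0<c<\frac35$, $\eta=\frac1{\sqrt{dT}}$, and $c_0=\max\left\{\sqrt{\frac{8\sigma^2}{n}\log\frac6c},\ \sqrt{\frac{8(B+\beta)^2}{p^2}\log\frac{6}{3-5c}}\right\}$. (i) If the adversary is adaptive, or static with $\tau(t)\le\frac{2}{p^2}\log\frac6c$, then $$\frac1T\sum_{t=0}^{T-1}\mathbb{E}\|\nabla F(w(t))\|_1\le\frac1c\left[\frac{(F(w(0))-F^* )\sqrt d}{\sqrt T}+\frac{L\sqrt d}{2\sqrt T}+\frac{d}{\sqrt{2\pi}}(B+\beta)e^{-n/2}+2d\frac{c_0}{\sqrt M}+4d\frac{(B+\beta)\sum_{t=0}^{T-1}\tau(t)}{pTM}\right].$$ (ii) If the adversary is static with $\tau(t)>\frac{2}{p^2}\log\frac6c$, then $$\frac1T\sum_{t=0}^{T-1}\mathbb{E}\|\nabla F(w(t))\|_1\le\frac1c\left[\frac{(F(w(0))-F^* )\sqrt d}{\sqrt T}+\frac{L\sqrt d}{2\sqrt T}+\frac{d}{\sqrt{2\pi}}(B+\beta)e^{-n/2}+2d\frac{c_0}{\sqrt M}+6d\frac{(B+\beta)\sum_{t=0}^{T-1}\tau(t)}{TM}\right].$$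
   Context: Setting: $M$ clients with local functions $f_m:\mathbb{R}^d\to\mathbb{R}$, $F(w)=\frac1M\sum_m f_m(w)$. Parameters: $\beta>0$, $B>0$, mini-batch size $n\ge1$, participation probability $p\in(0,1]$, step size $\eta>0$. $\mathrm{clip}\{g,B\}=\max\{-B,\min\{B,g\}\}$; $\mathrm{sign}(0)=0$. Process: from $w(0)$, in each iteration $t$ a set $\mathcal{S}(t)$ includes each client independently with probability $p$. An adversary chooses Byzantine clients $\mathcal{B}(t)\subseteq[M]$, $\tau(t)=|\mathcal{B}(t)|$; static means chosen independently of $\mathcal{S}(t)$, adaptive means possibly depending on $\mathcal{S}(t)$. Each $m\in\mathcal{S}(t)\setminus\mathcal{B}(t)$ draws $n$ independent stochastic gradients at $w(t)$ and sends $\hat{\boldsymbol g}_m(t)\in\{-1,1\}^d$ with independent coordinates equal to $1$ with probability $\frac{B+\beta+\mathrm{clip}\{\frac1n\sum_j\boldsymbol g^j_{mi}(t),B\}}{2B+2\beta}$ and $-1$ otherwise; each $m\in\mathcal{S}(t)\cap\mathcal{B}(t)$ sends an arbitrary vector in $\{-1,1\}^d$. The server sets $\tilde{\boldsymbol g}(t)$ to the coordinate-wise sign of the average of received vectors (empty average $=0$), and $w(t+1)=w(t)-\eta\tilde{\boldsymbol g}(t)$. Assumptions: $F(w)\ge F^*$ for all $w$; $F(w_1)\le F(w_2)+\langle\nabla F(w_2),w_1-w_2\rangle+\frac L2\|w_1-w_2\|^2$ for all $w_1,w_2$ with some $L\ge0$; for each $i$ there is $B_i>0$ with $|\nabla f_{mi}(w)|\le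 B_i$ for all $m,w$, $B_0=\max_iB_i$; a stochastic gradient $\boldsymbol g_m(w)$ is an independent unbiased estimate of $\nabla f_m(w)$ with $\boldsymbol g_{mi}(w)=\nabla f_{mi}(w)+\xi_{mi}$, $\xi_{mi}\sim\mathcal{N}(0,\sigma^2_{mi})$, and $\sigma^2=\max_{m,i}\sigma^2_{mi}$. The conditions on $\tau(t)$ in (i) and (ii) are required for every $t$. *)

theory Defs
  imports "HOL-Probability.Probability"
begin

text \<open>Vectors in R^d are modelled as real^'d with a finite index type 'd, so d = CARD('d).
Clients are 0,...,M-1.  A history of iterates is a list [w(0),...,w(t)].\<close>

definition clip :: "real \<Rightarrow> real \<Rightarrow> real" where
  "clip g B = max (- B) (min B g)"

definition l1norm :: "real^'d \<Rightarrow> real" where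
  "l1norm x = (\<Sum>i\<in>UNIV. \<bar>x $ i\<bar>)"

definition gauss :: "real \<Rightarrow> real \<Rightarrow> real measure" where
  "gauss mu s = (if s = 0 then return borel mu else density lborel (normal_density mu s))"

text \<open>Probability that a coordinate of an honest message equals 1: expectation, over
n i.i.d. stochastic gradient coordinates g^j = grad_i + xi^j with xi^j ~ N(0,s^2), of
(B + beta + clip(mean_j g^j, B)) / (2B + 2beta).\<close>
definition prob_one :: "nat \<Rightarrow> real \<Rightarrow> real \<Rightarrow> real \<Rightarrow> real \<Rightarrow> real" where
  "prob_one n B \<beta> mu s =
     (LINT x | PiM {..<n} (\<lambda>_. gauss mu s). (B + \<beta> + clip ((\<Sum>j<n. x j) / real n) B) / (2*B + 2*\<beta>))"

definition honest_msg :: "nat \<Rightarrow> real \<Rightarrow> real \<Rightarrow> ('d \<Rightarrow> real) \<Rightarrow> ('d \<Rightarrow> real) \<Rightarrow> (real^'d::finite) pmf" where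
  "honest_msg n B \<beta> g sd =
     map_pmf (\<lambda>b. \<chi> i. if b i then 1 else -1)
       (Pi_pmf UNIV False (\<lambda>i. bernoulli_pmf (prob_one n B \<beta> (g i) (sd i))))"

definition part_pmf :: "nat \<Rightarrow> real \<Rightarrow> nat set pmf" where
  "part_pmf M p = map_pmf (\<lambda>b. {m. m < M \<and> b m}) (Pi_pmf {..<M} False (\<lambda>_. bernoulli_pmf p))"

text \<open>Adversary: Bsel t h S = Byzantine set B(t) (given the history h and S(t));
byz t h S H m = vector sent by Byzantine client m (may depend on history, S(t) and the honest
messages H of this round).\<close>
definition sss_step ::
  "nat \<Rightarrow> nat \<Rightarrow> real \<Rightarrow> real \<Rightarrow> real \<Rightarrow> real
   \<Rightarrow> (nat \<Rightarrow> real^'d \<Rightarrow> real^'d) \<Rightarrow> (nat \<Rightarrow> 'd \<Rightarrow> real)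
   \<Rightarrow> (nat \<Rightarrow> (real^'d) list \<Rightarrow> nat set \<Rightarrow> nat set)
   \<Rightarrow> (nat \<Rightarrow> (real^'d) list \<Rightarrow> nat set \<Rightarrow> (nat \<Rightarrow> real^'d) \<Rightarrow> nat \<Rightarrow> real^'d)
   \<Rightarrow> nat \<Rightarrow> (real^'d::finite) list \<Rightarrow> (real^'d) list pmf" where
  "sss_step M n p B \<beta> \<eta> gradf sd Bsel byz t h =
     bind_pmf (part_pmf M p) (\<lambda>S.
       bind_pmf (Pi_pmf (S - Bsel t h S) 0 (\<lambda>m. honest_msg n B \<beta> (\<lambda>i. gradf m (last h) $ i) (sd m)))
         (\<lambda>H. let v = (\<lambda>m. if m \<in> Bsel t h S then byz t h S H m else H m);
                  avg = (1 / real (card S)) *\<^sub>R (\<Sum>m\<in>S. v m)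
              in return_pmf (h @ [last h - \<eta> *\<^sub>R (\<chi> i. sgn (avg $ i))])))"

primrec sss_proc ::
  "nat \<Rightarrow> nat \<Rightarrow> real \<Rightarrow> real \<Rightarrow> real \<Rightarrow> real
   \<Rightarrow> (nat \<Rightarrow> real^'d \<Rightarrow> real^'d) \<Rightarrow> (nat \<Rightarrow> 'd \<Rightarrow> real)
   \<Rightarrow> (nat \<Rightarrow> (real^'d) list \<Rightarrow> nat set \<Rightarrow> nat set)
   \<Rightarrow> (nat \<Rightarrow> (real^'d) list \<Rightarrow> nat set \<Rightarrow> (nat \<Rightarrow> real^'d) \<Rightarrow> nat \<Rightarrow> real^'d)
   \<Rightarrow> real^'d::finite \<Rightarrow> nat \<Rightarrow> (real^'d) list pmf" where
  "sss_proc M n p B \<beta> \<eta> gradf sd Bsel byz w0 0 = return_pmf [w0]"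
| "sss_proc M n p B \<beta> \<eta> gradf sd Bsel byz w0 (Suc t) =
     bind_pmf (sss_proc M n p B \<beta> \<eta> gradf sd Bsel byz w0 t) (sss_step M n p B \<beta> \<eta> gradf sd Bsel byz t)"

definition static_adv :: "(nat \<Rightarrow> 'h \<Rightarrow> nat set \<Rightarrow> nat set) \<Rightarrow> bool" where
  "static_adv Bsel \<longleftrightarrow> (\<forall>t h S S'. Bsel t h S = Bsel t h S')"

end

theory Submission
  imports Defs
begin



lemma exp_half_le_2: "exp (1/2::real) \<le> 2"
proof -
  have "exp (1/2::real) ^ 2 = exp 1" by (simp add: exp_of_nat_mult[symmetric])
  also have "\<dots> \<le> 4" using exp_le by simp
  finally have "exp (1/2::real) ^ 2 \<le> 2 ^ 2" by simp
  thus ?thesis by (rule power2_le_imp_le) simp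
qed

lemma nn_integral_xexp: "(\<integral>\<^sup>+x. ennreal (indicator {0..} x * (x * exp (- x))) \<partial>lborel) = 1"
proof -
  have "(\<integral>\<^sup>+x. ennreal (indicator {0..} x * (x * exp (- x))) \<partial>lborel)
      = (\<integral>\<^sup>+x\<in>{0..}. ennreal (x ^ 1 * exp (- x))\<partial>lborel)"
    by (intro nn_integral_cong) (auto split: split_indicator)
  also have "\<dots> = 1" using nn_intergal_power_times_exp_Ici[of 1] by simp
  finally show ?thesis .
qed

lemma gauss_tail:
  fixes \<mu> r B :: real
  assumes r: "r > 0" and D: "B - \<mu> \<ge> r"
  shows "(\<integral>\<^sup>+y. ennreal (normal_density \<mu> r y * max 0 (y - B)) \<partial>lborel)
           \<le> ennreal (r / 2 * std_normal_density ((B - \<mu>) / r))"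
proof -
  define k where "k = (B - \<mu>) / r"
  define l where "l = (k + 1) / r"
  define A where "A = exp (1/2) * std_normal_density k / (r * l)"
  have k1: "k \<ge> 1" using D r by (simp add: k_def field_simps)
  have lpos: "l > 0" using k1 r by (simp add: l_def)
  have Apos: "A \<ge> 0" using lpos r by (simp add: A_def)
  have pw: "normal_density \<mu> r y * max 0 (y - B) \<le> A * (indicator {0..} (l * (y - B)) * ((l * (y - B)) * exp (- (l * (y - B)))))" for y
  proof (cases "y \<ge> B")
    case False
    then show ?thesis using Apos lpos by (simp add: indicator_def mult_nonneg_nonneg)
  next
    case True
    define t where "t = y - B"
    have t0: "t \<ge> 0" using True by (simp add: t_def)
    have ym: "y - \<mu> = k * r + t" using r by (simp add: k_def t_def field_simps)
    have sq: "(k * r + t)\<^sup>2 \<ge> (k*r)\<^sup>2 + 2 * (k * r) * t + 2 * r * t - r\<^sup>2"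
    proof -
      have "(t - r)\<^sup>2 \<ge> 0" by simp
      thus ?thesis by (simp add: power2_eq_square algebra_simps)
    qed
    have e1: "- (y - \<mu>)\<^sup>2 / (2 * r\<^sup>2) \<le> - k\<^sup>2 / 2 + 1/2 - l * t"
    proof -
      have "(y - \<mu>)\<^sup>2 / (2 * r\<^sup>2) \<ge> ((k*r)\<^sup>2 + 2 * (k * r) * t + 2 * r * t - r\<^sup>2) / (2 * r\<^sup>2)"
        using sq ym r by (intro divide_right_mono) auto
      also have "((k*r)\<^sup>2 + 2 * (k * r) * t + 2 * r * t - r\<^sup>2) / (2 * r\<^sup>2) = k\<^sup>2 / 2 - 1/2 + l * t"
        using r by (simp add: l_def field_simps power2_eq_square)
      finally show ?thesis by simp
    qed
    have nd: "normal_density \<mu> r y \<le> exp (1/2) * std_normal_density k / r * exp (- (l * t))"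
    proof -
      have "normal_density \<mu> r y = 1 / (sqrt (2 * pi) * r) * exp (- (y - \<mu>)\<^sup>2 / (2 * r\<^sup>2))"
        using r by (simp add: normal_density_def real_sqrt_mult)
      also have "\<dots> \<le> 1 / (sqrt (2 * pi) * r) * exp (- k\<^sup>2 / 2 + 1/2 - l * t)"
        using e1 r by (intro mult_left_mono) auto
      also have "\<dots> = exp (1/2) * std_normal_density k / r * exp (- (l * t))"
        by (simp add: std_normal_density_def exp_add[symmetric] exp_diff field_simps)
      finally show ?thesis .
    qed
    have "normal_density \<mu> r y * max 0 (y - B) = normal_density \<mu> r y * t"
      using t0 by (simp add: t_def)
    also have "\<dots> \<le> exp (1/2) * std_normal_density k / r * exp (- (l * t)) * t"
      using nd t0 by (intro mult_right_mono) auto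
    also have "\<dots> = A * (indicator {0..} (l * (y - B)) * ((l * (y - B)) * exp (- (l * (y - B)))))"
      using t0 lpos r by (simp add: A_def t_def[symmetric] field_simps)
    finally show ?thesis .
  qed
  have "(\<integral>\<^sup>+y. ennreal (normal_density \<mu> r y * max 0 (y - B)) \<partial>lborel)
      \<le> (\<integral>\<^sup>+y. ennreal (A * (indicator {0..} (l * (y - B)) * ((l * (y - B)) * exp (- (l * (y - B)))))) \<partial>lborel)"
    by (intro nn_integral_mono ennreal_leI pw)
  also have "\<dots> = ennreal \<bar>1/l\<bar> * (\<integral>\<^sup>+x. ennreal (A * (indicator {0..} (l * ((B + 1/l * x) - B)) * ((l * ((B + 1/l * x) - B)) * exp (- (l * ((B + 1/l * x) - B)))))) \<partial>lborel)"
    using lpos by (intro nn_integral_real_affine) auto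
  also have "(\<lambda>x. ennreal (A * (indicator {0..} (l * ((B + 1/l * x) - B)) * ((l * ((B + 1/l * x) - B)) * exp (- (l * ((B + 1/l * x) - B)))))))
      = (\<lambda>x. ennreal A * ennreal (indicator {0..} x * (x * exp (- x))))"
    using lpos Apos by (intro ext) (simp add: ennreal_mult')
  also have "(\<integral>\<^sup>+x. ennreal A * ennreal (indicator {0..} x * (x * exp (- x))) \<partial>lborel) = ennreal A"
    by (simp add: nn_integral_cmult nn_integral_xexp)
  also have "ennreal \<bar>1/l\<bar> * ennreal A = ennreal (exp (1/2) * std_normal_density k * r / (k+1)\<^sup>2)"
  proof -
    have e1: "\<bar>1/l\<bar> * A = exp (1/2) * std_normal_density k / (r * l^2)"
      using lpos r by (simp add: A_def power2_eq_square field_simps)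
    have e2: "r * l^2 = (k+1)^2 / r" using r by (simp add: l_def power2_eq_square field_simps)
    have "\<bar>1/l\<bar> * A = exp (1/2) * std_normal_density k * r / (k+1)\<^sup>2"
      unfolding e1 e2 using r by simp
    thus ?thesis using Apos by (simp add: ennreal_mult[symmetric])
  qed
  also have "\<dots> \<le> ennreal (r / 2 * std_normal_density k)"
  proof (intro ennreal_leI)
    have "exp (1/2) * std_normal_density k * r / (k+1)\<^sup>2 \<le> 2 * std_normal_density k * r / 4"
    proof -
      have h4: "4 \<le> (k+1)\<^sup>2" using power_mono[of 2 "k+1" 2] k1 by simp
      have hp: "std_normal_density k \<ge> 0" by simp
      have "exp (1/2) * std_normal_density k * r \<le> 2 * std_normal_density k * r"
        using exp_half_le_2 hp r by (intro mult_right_mono) auto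
      moreover have "2 * std_normal_density k * r / (k+1)\<^sup>2 \<le> 2 * std_normal_density k * r / 4"
        using h4 hp r by (intro divide_left_mono) auto
      ultimately show ?thesis using h4
        by (meson divide_right_mono dual_order.trans zero_le_power2)
    qed
    thus "exp (1/2) * std_normal_density k * r / (k+1)\<^sup>2 \<le> r / 2 * std_normal_density k" by simp
  qed
  finally show ?thesis by (simp add: k_def)
qed

lemma std_normal_density_mono:
  assumes "0 \<le> b" "b \<le> a" shows "std_normal_density a \<le> std_normal_density b"
proof -
  have "b\<^sup>2 \<le> a\<^sup>2" using assms by (intro power_mono) auto
  hence "exp (- a\<^sup>2 / 2) \<le> exp (- b\<^sup>2 / 2)" by simp
  thus ?thesis unfolding std_normal_density_def by (intro mult_left_mono) auto
qed

lemma gauss_tail_lower: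
  fixes \<mu> r B :: real
  assumes r: "r > 0" and D: "B + \<mu> \<ge> r"
  shows "(\<integral>\<^sup>+y. ennreal (normal_density \<mu> r y * max 0 (- y - B)) \<partial>lborel)
           \<le> ennreal (r / 2 * std_normal_density ((B + \<mu>) / r))"
proof -
  have "(\<integral>\<^sup>+y. ennreal (normal_density (- \<mu>) r y * max 0 (y - B)) \<partial>lborel)
      = ennreal \<bar>-1\<bar> * (\<integral>\<^sup>+y. ennreal (normal_density (- \<mu>) r (0 + (-1) * y) * max 0 ((0 + (-1) * y) - B)) \<partial>lborel)"
    by (intro nn_integral_real_affine) auto
  also have "(\<lambda>y. ennreal (normal_density (- \<mu>) r (0 + (-1) * y) * max 0 ((0 + (-1) * y) - B)))
     = (\<lambda>y. ennreal (normal_density \<mu> r y * max 0 (- y - B)))"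
    by (intro ext) (auto simp: normal_density_def power2_commute max_def)
  finally have "(\<integral>\<^sup>+y. ennreal (normal_density \<mu> r y * max 0 (- y - B)) \<partial>lborel)
      = (\<integral>\<^sup>+y. ennreal (normal_density (- \<mu>) r y * max 0 (y - B)) \<partial>lborel)" by simp
  also have "\<dots> \<le> ennreal (r / 2 * std_normal_density ((B - (- \<mu>)) / r))"
    using assms by (intro gauss_tail) auto
  finally show ?thesis by simp
qed

lemma integrable_nd_tail:
  assumes r: "r > 0"
  shows "integrable lborel (\<lambda>y. normal_density \<mu> r y * max 0 (a * y + b))"
proof (rule Bochner_Integration.integrable_bound)
  show "integrable lborel (\<lambda>y. \<bar>a\<bar> * (normal_density \<mu> r y * \<bar>y - \<mu>\<bar> ^ 1) + (\<bar>a\<bar> * \<bar>\<mu>\<bar> + \<bar>b\<bar>) * normal_density \<mu> r y)"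
    by (intro Bochner_Integration.integrable_add integrable_mult_right integrable_normal_moment_abs
        integrable_normal_density r)
  show "AE y in lborel. norm (normal_density \<mu> r y * max 0 (a * y + b)) \<le>
          norm (\<bar>a\<bar> * (normal_density \<mu> r y * \<bar>y - \<mu>\<bar> ^ 1) + (\<bar>a\<bar> * \<bar>\<mu>\<bar> + \<bar>b\<bar>) * normal_density \<mu> r y)"
  proof (intro AE_I2)
    fix y
    have nd: "normal_density \<mu> r y \<ge> 0" by simp
    have "\<bar>max 0 (a * y + b)\<bar> \<le> \<bar>a\<bar> * \<bar>y - \<mu>\<bar> + (\<bar>a\<bar> * \<bar>\<mu>\<bar> + \<bar>b\<bar>)"
    proof -
      have "\<bar>a * y\<bar> \<le> \<bar>a\<bar> * \<bar>y - \<mu>\<bar> + \<bar>a\<bar> * \<bar>\<mu>\<bar>"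
        by (metis abs_mult abs_triangle_ineq diff_add_cancel distrib_left mult_left_mono abs_ge_zero)
      thus ?thesis by (smt (verit))
    qed
    hence "normal_density \<mu> r y * \<bar>max 0 (a * y + b)\<bar> \<le> normal_density \<mu> r y * (\<bar>a\<bar> * \<bar>y - \<mu>\<bar> + (\<bar>a\<bar> * \<bar>\<mu>\<bar> + \<bar>b\<bar>))"
      using nd by (rule mult_left_mono)
    thus "norm (normal_density \<mu> r y * max 0 (a * y + b)) \<le>
          norm (\<bar>a\<bar> * (normal_density \<mu> r y * \<bar>y - \<mu>\<bar> ^ 1) + (\<bar>a\<bar> * \<bar>\<mu>\<bar> + \<bar>b\<bar>) * normal_density \<mu> r y)"
      using nd by (simp add: abs_mult algebra_simps)
  qed
qed simp

lemma clip_bias_lborel: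
  fixes \<mu> r B \<kappa> :: real
  assumes r: "r > 0" and k: "\<kappa> \<ge> 0" and D1: "B - \<mu> \<ge> r * \<kappa>" and D2: "B + \<mu> \<ge> r * \<kappa>"
    and k1: "\<kappa> \<ge> 1"
  shows "\<bar>(\<integral>y. normal_density \<mu> r y * clip y B \<partial>lborel) - \<mu>\<bar> \<le> r / 2 * std_normal_density \<kappa>"
proof -
  have Bpos: "B > 0" using D1 D2 r k1
    by (smt (verit, best) mult_le_cancel_left1)
  define T1 where "T1 = (\<integral>y. normal_density \<mu> r y * max 0 (1 * y + (- B)) \<partial>lborel)"
  define T2 where "T2 = (\<integral>y. normal_density \<mu> r y * max 0 ((-1) * y + (- B)) \<partial>lborel)"
  have i1: "integrable lborel (\<lambda>y. normal_density \<mu> r y * max 0 (1 * y + (- B)))"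
    by (rule integrable_nd_tail) (rule r)
  have i2: "integrable lborel (\<lambda>y. normal_density \<mu> r y * max 0 ((-1) * y + (- B)))"
    by (rule integrable_nd_tail) (rule r)
  have i0: "integrable lborel (\<lambda>y. normal_density \<mu> r y * y)"
    using integrable_normal_moment_nz_1 r by blast
  have eq: "normal_density \<mu> r y * clip y B = normal_density \<mu> r y * y + normal_density \<mu> r y * max 0 ((-1) * y + (- B))
       - normal_density \<mu> r y * max 0 (1 * y + (- B))" for y
    using Bpos by (cases "y \<le> - B"; cases "y \<le> B") (auto simp: clip_def algebra_simps max_def min_def)
  have "(\<integral>y. normal_density \<mu> r y * clip y B \<partial>lborel) = \<mu> + T2 - T1"
    unfolding eq T1_def T2_def
    using i0 i1 i2 integral_normal_moment_nz_1[OF r, of \<mu>]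
    by (simp add: Bochner_Integration.integral_diff Bochner_Integration.integral_add)
  moreover have "T1 \<ge> 0" "T2 \<ge> 0" unfolding T1_def T2_def by (auto intro!: integral_nonneg_AE)
  moreover have "T1 \<le> r / 2 * std_normal_density \<kappa>"
  proof -
    have rk: "r \<le> r * \<kappa>" using r k1 by simp
    have nn: "(\<integral>\<^sup>+y. ennreal (normal_density \<mu> r y * max 0 (1 * y + (- B))) \<partial>lborel) \<le> ennreal (r / 2 * std_normal_density ((B - \<mu>) / r))"
      using gauss_tail[of r B \<mu>] r rk D1 by simp
    have "T1 \<le> r / 2 * std_normal_density ((B - \<mu>) / r)"
      unfolding T1_def
      by (rule integral_real_bounded) (use nn r in auto)
    also have "\<dots> \<le> r / 2 * std_normal_density \<kappa>"
      using r D1 k by (intro mult_left_mono std_normal_density_mono) (auto simp: field_simps)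
    finally show ?thesis .
  qed
  moreover have "T2 \<le> r / 2 * std_normal_density \<kappa>"
  proof -
    have rk: "r \<le> r * \<kappa>" using r k1 by simp
    have nn: "(\<integral>\<^sup>+y. ennreal (normal_density \<mu> r y * max 0 ((-1) * y + (- B))) \<partial>lborel) \<le> ennreal (r / 2 * std_normal_density ((B + \<mu>) / r))"
      using gauss_tail_lower[of r B \<mu>] r rk D2 by simp
    have "T2 \<le> r / 2 * std_normal_density ((B + \<mu>) / r)"
      unfolding T2_def
      by (rule integral_real_bounded) (use nn r in auto)
    also have "\<dots> \<le> r / 2 * std_normal_density \<kappa>"
      using r D2 k by (intro mult_left_mono std_normal_density_mono) (auto simp: field_simps)
    finally show ?thesis .
  qed
  ultimately show ?thesis by linarith
qed

lemma sets_gauss[simp]: "sets (gauss m s) = sets borel"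
  unfolding gauss_def by auto

lemma space_gauss[simp]: "space (gauss m s) = UNIV"
  using sets_eq_imp_space_eq[OF sets_gauss[of m s]] by simp

lemma prob_space_gauss: "prob_space (gauss m s)"
proof (cases "s = 0")
  case False
  have "normal_density m s = normal_density m \<bar>s\<bar>" by (intro ext) (simp add: normal_density_def)
  thus ?thesis using False prob_space_normal_density[of "\<bar>s\<bar>" m] by (simp add: gauss_def)
qed (simp add: gauss_def prob_space_return)

lemma gauss_pos: "s \<noteq> 0 \<Longrightarrow> gauss m s = density lborel (normal_density m s)"
  unfolding gauss_def by simp

lemma PiM_gauss_facts:
  fixes n :: nat and \<mu> s :: real
  defines "P \<equiv> PiM {..<n} (\<lambda>_. gauss \<mu> s)"
  assumes s: "s > 0" and n: "n \<ge> 1"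
  shows "distributed P lborel (\<lambda>x. (\<Sum>j<n. x j) / real n) (normal_density \<mu> (s / sqrt n))"
proof -
  have Pprob: "prob_space P" unfolding P_def by (intro prob_space_PiM prob_space_gauss)
  interpret P: prob_space P by (rule Pprob)
  have setsP: "sets P = sets (PiM {..<n} (\<lambda>_. borel))"
    unfolding P_def by (intro sets_PiM_cong) auto
  have spaceP: "space P = space (PiM {..<n} (\<lambda>_. borel :: real measure))"
    using sets_eq_imp_space_eq[OF setsP] .
  have comp: "distr P (gauss \<mu> s) (\<lambda>x. x j) = gauss \<mu> s" if "j \<in> {..<n}" for j
    unfolding P_def using that by (intro distr_PiM_component prob_space_gauss) auto
  have comp': "distr P borel (\<lambda>x. x j) = gauss \<mu> s" if "j \<in> {..<n}" for j
  proof -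
    have "distr P borel (\<lambda>x. x j) = distr P (gauss \<mu> s) (\<lambda>x. x j)"
      by (intro distr_cong) auto
    thus ?thesis using comp[OF that] by simp
  qed
  have rv: "(\<lambda>x. x j) \<in> measurable P borel" if "j \<in> {..<n}" for j
  proof -
    have "(\<lambda>x. x j) \<in> measurable (PiM {..<n} (\<lambda>_. borel :: real measure)) borel"
      using that by simp
    thus ?thesis using measurable_cong_sets[OF setsP refl, of borel] by blast
  qed
  have indep: "P.indep_vars (\<lambda>_. borel) (\<lambda>j x. x j) {..<n}"
  proof (subst P.indep_vars_iff_distr_eq_PiM')
    show "{..<n} \<noteq> {}" using n by (auto simp: lessThan_empty_iff)
    show "(\<lambda>x. x j) \<in> measurable P borel" if "j \<in> {..<n}" for j using rv that .
    have "distr P (PiM {..<n} (\<lambda>_. borel)) (\<lambda>x. restrict (\<lambda>i. x i) {..<n}) = distr P P (\<lambda>x. x)"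
    proof (intro distr_cong)
      show "sets (PiM {..<n} (\<lambda>_. borel)) = sets P" using setsP by simp
      show "restrict (\<lambda>i. x i) {..<n} = x" if "x \<in> space P" for x
        using that unfolding spaceP by (auto simp: space_PiM PiE_def extensional_def fun_eq_iff)
    qed simp
    also have "\<dots> = P" by (rule distr_id)
    also have "P = PiM {..<n} (\<lambda>i. distr P borel (\<lambda>x. x i))"
      unfolding P_def by (intro PiM_cong refl comp'[symmetric, unfolded P_def])
    finally show "distr P (PiM {..<n} (\<lambda>_. borel)) (\<lambda>x. restrict (\<lambda>i. x i) {..<n}) = PiM {..<n} (\<lambda>i. distr P borel (\<lambda>x. x i))"
      unfolding P_def .
  qed
  have dist: "distributed P lborel (\<lambda>x. x j) (normal_density \<mu> s)" if "j \<in> {..<n}" for j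
    unfolding distributed_def
  proof (intro conjI)
    have "distr P lborel (\<lambda>x. x j) = distr P (gauss \<mu> s) (\<lambda>x. x j)"
      by (intro distr_cong) auto
    thus "distr P lborel (\<lambda>x. x j) = density lborel (\<lambda>x. ennreal (normal_density \<mu> s x))"
      using comp[OF that] s by (simp add: gauss_pos)
    show "(\<lambda>x. ennreal (normal_density \<mu> s x)) \<in> borel_measurable lborel" by simp
    show "(\<lambda>x. x j) \<in> measurable P lborel" using rv[OF that] measurable_cong_sets[OF refl sets_lborel, of P] by blast
  qed
  have sum: "distributed P lborel (\<lambda>x. \<Sum>j\<in>{..<n}. x j) (normal_density (\<Sum>j\<in>{..<n}. \<mu>) (sqrt (\<Sum>j\<in>{..<n}. s\<^sup>2)))"
    using n s by (intro P.sum_indep_normal indep dist) (auto simp: lessThan_empty_iff)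
  have sum': "distributed P lborel (\<lambda>x. \<Sum>j<n. x j) (normal_density (real n * \<mu>) (sqrt (real n) * s))"
    using sum s by (simp add: real_sqrt_mult)
  have "distributed P lborel (\<lambda>x. 0 + (1 / real n) * (\<Sum>j<n. x j))
          (normal_density (0 + (1 / real n) * (real n * \<mu>)) (\<bar>1 / real n\<bar> * (sqrt (real n) * s)))"
    using n s by (intro P.normal_density_affine sum') auto
  moreover have "\<bar>1 / real n\<bar> * (sqrt (real n) * s) = s / sqrt n"
  proof -
    have "sqrt (real n) * sqrt (real n) = real n" by simp
    thus ?thesis using n by (simp add: field_simps)
  qed
  moreover have "0 + (1 / real n) * (real n * \<mu>) = \<mu>" using n by simp
  moreover have "(\<lambda>x. 0 + (1 / real n) * (\<Sum>j<n. x j)) = (\<lambda>x. (\<Sum>j<n. x j) / real n)" by auto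
  ultimately show ?thesis by simp
qed

lemma prob_one_facts:
  fixes n :: nat and B \<beta> \<mu> s :: real
  assumes n: "n \<ge> 1" and s: "s \<ge> 0" and mB: "\<bar>\<mu>\<bar> + s < B" and beta: "\<beta> > 0"
  shows "0 \<le> prob_one n B \<beta> \<mu> s" "prob_one n B \<beta> \<mu> s \<le> 1"
    "\<bar>(B + \<beta>) * (2 * prob_one n B \<beta> \<mu> s - 1) - \<mu>\<bar> \<le> s / 2 * std_normal_density (sqrt n)"
proof -
  define P where "P = PiM {..<n} (\<lambda>_. gauss \<mu> s)"
  have Pprob: "prob_space P" unfolding P_def by (intro prob_space_PiM prob_space_gauss)
  interpret P: prob_space P by (rule Pprob)
  have setsP: "sets P = sets (PiM {..<n} (\<lambda>_. borel))"
    unfolding P_def by (intro sets_PiM_cong) auto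
  have Bpos: "B > 0" using mB s by linarith
  define X where "X = (\<lambda>x::nat \<Rightarrow> real. clip ((\<Sum>j<n. x j) / real n) B)"
  have measX0: "X \<in> borel_measurable (PiM {..<n} (\<lambda>_. borel :: real measure))"
    unfolding X_def clip_def by measurable
  have measX: "X \<in> borel_measurable P"
    using measX0 measurable_cong_sets[OF setsP refl, of borel] by blast
  have Xb: "\<bar>X x\<bar> \<le> B" for x unfolding X_def clip_def using Bpos by auto
  have intX: "integrable P X"
    by (rule P.integrable_const_bound[where B=B]) (use Xb measX in auto)
  define E where "E = (\<integral>x. X x \<partial>P)"
  have Eb: "\<bar>E\<bar> \<le> B"
  proof -
    have "\<bar>E\<bar> \<le> (\<integral>x. \<bar>X x\<bar> \<partial>P)" unfolding E_def by (rule integral_abs_bound)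
    also have "\<dots> \<le> (\<integral>x. B \<partial>P)"
      by (intro integral_mono) (use intX Xb in auto)
    finally show ?thesis by (simp add: P.prob_space)
  qed
  have po: "prob_one n B \<beta> \<mu> s = (B + \<beta> + E) / (2 * B + 2 * \<beta>)"
  proof -
    have "prob_one n B \<beta> \<mu> s = (\<integral>x. (B + \<beta> + X x) / (2*B + 2*\<beta>) \<partial>P)"
      unfolding prob_one_def P_def X_def by simp
    also have "\<dots> = (\<integral>x. (B + \<beta> + X x) \<partial>P) / (2*B + 2*\<beta>)" by simp
    also have "(\<integral>x. (B + \<beta> + X x) \<partial>P) = B + \<beta> + E"
      unfolding E_def using intX by (simp add: Bochner_Integration.integral_add P.prob_space)
    finally show ?thesis .
  qed
  show "0 \<le> prob_one n B \<beta> \<mu> s" using po Eb beta Bpos by (auto intro!: divide_nonneg_pos)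
  show "prob_one n B \<beta> \<mu> s \<le> 1" using po Eb beta Bpos by (auto simp: divide_le_eq_1)
  have key: "(B + \<beta>) * (2 * prob_one n B \<beta> \<mu> s - 1) = E"
    using po beta Bpos by (simp add: field_simps)
  have "\<bar>E - \<mu>\<bar> \<le> s / 2 * std_normal_density (sqrt n)"
  proof (cases "s = 0")
    case True
    have PiMret: "P = return (PiM {..<n} (\<lambda>_. borel)) (restrict (\<lambda>_. \<mu>) {..<n})"
      unfolding P_def True gauss_def by (simp add: PiM_return)
    have "E = X (restrict (\<lambda>_. \<mu>) {..<n})"
      unfolding E_def PiMret by (rule integral_return) (auto simp: space_PiM measX0)
    also have "\<dots> = \<mu>" using n mB True unfolding X_def clip_def by auto
    finally show ?thesis using True by simp
  next
    case False
    hence spos: "s > 0" using s by simp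
    define r where "r = s / sqrt n"
    have sn: "sqrt (real n) \<ge> 1" using n by simp
    have rpos: "r > 0" using spos sn by (simp add: r_def)
    have rs: "r * sqrt n = s" using sn by (simp add: r_def)
    have rle: "r \<le> s" using spos sn by (simp add: r_def field_simps)
    have D: "distributed P lborel (\<lambda>x. (\<Sum>j<n. x j) / real n) (normal_density \<mu> r)"
      unfolding P_def r_def by (rule PiM_gauss_facts[OF spos n])
    have "E = (\<integral>y. normal_density \<mu> r y * clip y B \<partial>lborel)"
      unfolding E_def X_def
      by (rule distributed_integral[OF D, symmetric]) (auto simp: clip_def)
    hence "\<bar>E - \<mu>\<bar> \<le> r / 2 * std_normal_density (sqrt n)"
      using clip_bias_lborel[of r "sqrt n" B \<mu>] rpos sn rs mB by auto
    also have "\<dots> \<le> s / 2 * std_normal_density (sqrt n)"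
      using rle by (intro mult_right_mono) auto
    finally show ?thesis .
  qed
  thus "\<bar>(B + \<beta>) * (2 * prob_one n B \<beta> \<mu> s - 1) - \<mu>\<bar> \<le> s / 2 * std_normal_density (sqrt n)"
    using key by simp
qed



lemma expectation_bind_fin:
  fixes F :: "'b \<Rightarrow> real"
  assumes "finite (set_pmf X)" "\<And>x. x \<in> set_pmf X \<Longrightarrow> finite (set_pmf (K x))"
  shows "measure_pmf.expectation (bind_pmf X K) F = measure_pmf.expectation X (\<lambda>x. measure_pmf.expectation (K x) F)"
proof -
  have "measure_pmf.expectation (bind_pmf X K) F = (\<Sum>a\<in>set_pmf X. pmf X a *\<^sub>R measure_pmf.expectation (K a) F)"
    using assms by (intro pmf_expectation_bind) auto
  also have "\<dots> = measure_pmf.expectation X (\<lambda>x. measure_pmf.expectation (K x) F)"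
    using assms by (intro integral_measure_pmf[symmetric]) auto
  finally show ?thesis .
qed

lemma expectation_pair_mult:
  fixes g :: "'a \<Rightarrow> real" and h :: "'b \<Rightarrow> real"
  assumes "finite (set_pmf X)" "finite (set_pmf Y)"
  shows "measure_pmf.expectation (pair_pmf X Y) (\<lambda>z. g (fst z) * h (snd z))
       = measure_pmf.expectation X g * measure_pmf.expectation Y h"
proof -
  have "measure_pmf.expectation (pair_pmf X Y) (\<lambda>z. g (fst z) * h (snd z))
      = measure_pmf.expectation X (\<lambda>x. measure_pmf.expectation (map_pmf (Pair x) Y) (\<lambda>z. g (fst z) * h (snd z)))"
    unfolding pair_pmf_def map_pmf_def[symmetric] using assms
    by (intro expectation_bind_fin) auto
  also have "\<dots> = measure_pmf.expectation X (\<lambda>x. g x * measure_pmf.expectation Y h)"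
    by simp
  also have "\<dots> = measure_pmf.expectation X g * measure_pmf.expectation Y h"
    by simp
  finally show ?thesis .
qed

lemma finite_set_Pi_pmf:
  assumes "finite A" "\<And>m. m \<in> A \<Longrightarrow> finite (set_pmf (P m))"
  shows "finite (set_pmf (Pi_pmf A d P))"
  using assms by (simp add: set_Pi_pmf finite_PiE_dflt)

lemma Pi_pmf_pair:
  assumes "finite A"
  shows "pair_pmf (Pi_pmf A d1 P1) (Pi_pmf A d2 P2)
       = map_pmf (\<lambda>f. (fst \<circ> f, snd \<circ> f)) (Pi_pmf A (d1, d2) (\<lambda>m. pair_pmf (P1 m) (P2 m)))"
proof (rule pmf_eqI)
  fix z :: "('a \<Rightarrow> 'b) \<times> ('a \<Rightarrow> 'c)"
  obtain f1 f2 where z: "z = (f1, f2)" by (cases z)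
  have inj: "inj (\<lambda>f::'a \<Rightarrow> 'b \<times> 'c. (fst \<circ> f, snd \<circ> f))"
    by (intro injI) (auto simp: fun_eq_iff prod_eq_iff)
  have zz: "z = (\<lambda>f. (fst \<circ> f, snd \<circ> f)) (\<lambda>x. (f1 x, f2 x))" using z by (auto simp: o_def)
  have "pmf (map_pmf (\<lambda>f. (fst \<circ> f, snd \<circ> f)) (Pi_pmf A (d1, d2) (\<lambda>m. pair_pmf (P1 m) (P2 m)))) z
      = pmf (Pi_pmf A (d1, d2) (\<lambda>m. pair_pmf (P1 m) (P2 m))) (\<lambda>x. (f1 x, f2 x))"
    unfolding zz by (rule pmf_map_inj'[OF inj])
  also have "\<dots> = pmf (pair_pmf (Pi_pmf A d1 P1) (Pi_pmf A d2 P2)) z"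
    unfolding z pmf_pair using assms
    by (auto simp: pmf_Pi prod.distrib pmf_pair)
  finally show "pmf (pair_pmf (Pi_pmf A d1 P1) (Pi_pmf A d2 P2)) z = pmf (map_pmf (\<lambda>f. (fst \<circ> f, snd \<circ> f)) (Pi_pmf A (d1, d2) (\<lambda>m. pair_pmf (P1 m) (P2 m)))) z" ..
qed

lemma var_Pi_pmf:
  fixes \<psi> :: "'a \<Rightarrow> 'b \<Rightarrow> real"
  assumes "finite A" "\<And>m. m \<in> A \<Longrightarrow> finite (set_pmf (P m))"
    and "\<And>m. m \<in> A \<Longrightarrow> measure_pmf.expectation (P m) (\<psi> m) = 0"
  shows "measure_pmf.expectation (Pi_pmf A d P) (\<lambda>q. (\<Sum>m\<in>A. \<psi> m (q m))\<^sup>2)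
       = (\<Sum>m\<in>A. measure_pmf.expectation (P m) (\<lambda>y. (\<psi> m y)\<^sup>2))"
  using assms
proof (induction A rule: finite_induct)
  case empty
  then show ?case by simp
next
  case (insert x A)
  let ?S = "\<lambda>f. \<Sum>m\<in>A. \<psi> m (f m)"
  have finA: "finite (set_pmf (Pi_pmf A d P))"
    using insert by (intro finite_set_Pi_pmf) auto
  have finx: "finite (set_pmf (P x))" using insert by auto
  have eq: "(\<Sum>m\<in>insert x A. \<psi> m ((f(x := y)) m)) = \<psi> x y + ?S f" for f y
    using insert.hyps by (simp add: sum.insert) (intro sum.cong, auto)
  have "measure_pmf.expectation (Pi_pmf (insert x A) d P) (\<lambda>q. (\<Sum>m\<in>insert x A. \<psi> m (q m))\<^sup>2)
      = measure_pmf.expectation (pair_pmf (P x) (Pi_pmf A d P)) (\<lambda>z. (\<psi> x (fst z) + ?S (snd z))\<^sup>2)"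
  proof -
    have eq2: "(\<Sum>m\<in>A. \<psi> m (if m = x then a else f m)) = ?S f" for a f
      using insert.hyps by (intro sum.cong) auto
    show ?thesis using insert.hyps by (simp add: Pi_pmf_insert case_prod_unfold eq eq2)
  qed
  also have "\<dots> = measure_pmf.expectation (pair_pmf (P x) (Pi_pmf A d P))
                   (\<lambda>z. (\<psi> x (fst z))\<^sup>2 + 2 * (\<psi> x (fst z) * ?S (snd z)) + (?S (snd z))\<^sup>2)"
    by (intro Bochner_Integration.integral_cong refl) (simp add: power2_sum algebra_simps)
  also have "\<dots> = measure_pmf.expectation (P x) (\<lambda>y. (\<psi> x y)\<^sup>2)
       + 2 * (measure_pmf.expectation (P x) (\<psi> x) * measure_pmf.expectation (Pi_pmf A d P) ?S)
       + measure_pmf.expectation (Pi_pmf A d P) (\<lambda>f. (?S f)\<^sup>2)"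
  proof -
    have fin: "finite (set_pmf (pair_pmf (P x) (Pi_pmf A d P)))" using finA finx by simp
    note ii = integrable_measure_pmf_finite[OF fin]
    show ?thesis
      using expectation_pair_mult[OF finx finA, of "\<psi> x" ?S]
        expectation_pair_pmf_fst[of "P x" "Pi_pmf A d P" "\<lambda>y. (\<psi> x y)\<^sup>2"]
        expectation_pair_pmf_snd[of "P x" "Pi_pmf A d P" "\<lambda>f. (?S f)\<^sup>2"]
      by (simp add: Bochner_Integration.integral_add ii)
  qed
  also have "\<dots> = (\<Sum>m\<in>insert x A. measure_pmf.expectation (P m) (\<lambda>y. (\<psi> m y)\<^sup>2))"
    using insert by simp
  finally show ?case .
qed

lemma sign_lemma:
  fixes Q :: "'a pmf" and X Y :: "'a \<Rightarrow> real" and g R :: real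
  assumes fin: "finite (set_pmf Q)"
    and XY: "\<And>q. q \<in> set_pmf Q \<Longrightarrow> sgn g * X q \<ge> Y q"
    and R: "R > 0"
  shows "measure_pmf.expectation Q (\<lambda>q. g * sgn (X q))
      \<ge> \<bar>g\<bar> * (1 - 2 * measure_pmf.expectation Q (\<lambda>q. (Y q - R)\<^sup>2) / R\<^sup>2)"
proof -
  note ii = integrable_measure_pmf_finite[OF fin]
  have pw: "g * sgn (X q) \<ge> \<bar>g\<bar> * (1 - 2 * (Y q - R)\<^sup>2 / R\<^sup>2)" if q: "q \<in> set_pmf Q" for q
  proof (cases "g = 0")
    case True then show ?thesis by simp
  next
    case False
    have gs: "g * sgn (X q) = \<bar>g\<bar> * sgn (sgn g * X q)"
      using False by (cases "g > 0") (auto simp: sgn_mult)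
    show ?thesis
    proof (cases "sgn g * X q > 0")
      case True
      have "\<bar>g\<bar> * (1 - 2 * (Y q - R)\<^sup>2 / R\<^sup>2) \<le> \<bar>g\<bar> * 1"
        by (intro mult_left_mono) auto
      thus ?thesis using True gs by simp
    next
      case False
      hence "Y q \<le> 0" using XY[OF q] by simp
      hence "R\<^sup>2 \<le> (R - Y q)\<^sup>2" using R by (intro power_mono) auto
      hence "R\<^sup>2 \<le> (Y q - R)\<^sup>2" by (simp add: power2_commute)
      hence "(Y q - R)\<^sup>2 / R\<^sup>2 \<ge> 1" using R by simp
      hence "1 - 2 * (Y q - R)\<^sup>2 / R\<^sup>2 \<le> -1" by simp
      hence "\<bar>g\<bar> * (1 - 2 * (Y q - R)\<^sup>2 / R\<^sup>2) \<le> \<bar>g\<bar> * (-1)"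
        by (intro mult_left_mono) auto
      moreover have "\<bar>g\<bar> * sgn (sgn g * X q) \<ge> \<bar>g\<bar> * (-1)"
        by (intro mult_left_mono) (auto simp: sgn_if)
      ultimately show ?thesis using gs by simp
    qed
  qed
  have "measure_pmf.expectation Q (\<lambda>q. \<bar>g\<bar> * (1 - 2 * (Y q - R)\<^sup>2 / R\<^sup>2))
       \<le> measure_pmf.expectation Q (\<lambda>q. g * sgn (X q))"
    by (intro integral_mono_AE ii AE_pmfI pw)
  moreover have "measure_pmf.expectation Q (\<lambda>q. \<bar>g\<bar> * (1 - 2 * (Y q - R)\<^sup>2 / R\<^sup>2))
      = \<bar>g\<bar> * (1 - 2 * measure_pmf.expectation Q (\<lambda>q. (Y q - R)\<^sup>2) / R\<^sup>2)"
    by (simp add: Bochner_Integration.integral_diff ii measure_pmf.prob_space del: integral_mult_right_zero)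
  ultimately show ?thesis by linarith
qed

lemma expectation_bernoulli:
  fixes f :: "bool \<Rightarrow> real"
  assumes "0 \<le> p" "p \<le> 1"
  shows "measure_pmf.expectation (bernoulli_pmf p) f = p * f True + (1 - p) * f False"
proof -
  have "measure_pmf.expectation (bernoulli_pmf p) f = (\<Sum>b\<in>UNIV. pmf (bernoulli_pmf p) b *\<^sub>R f b)"
    by (intro integral_measure_pmf) auto
  thus ?thesis using assms by (simp add: UNIV_bool)
qed

lemma expectation_Pi_component:
  fixes h :: "'b \<Rightarrow> real"
  assumes "finite A" "m \<in> A"
  shows "measure_pmf.expectation (Pi_pmf A d P) (\<lambda>q. h (q m)) = measure_pmf.expectation (P m) h"
proof -
  have "measure_pmf.expectation (Pi_pmf A d P) (\<lambda>q. h (q m)) = measure_pmf.expectation (map_pmf (\<lambda>q. q m) (Pi_pmf A d P)) h"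
    by simp
  also have "map_pmf (\<lambda>q. q m) (Pi_pmf A d P) = P m" using assms by (simp add: Pi_pmf_component)
  finally show ?thesis .
qed

lemma coord_bound:
  fixes Q :: "(nat \<Rightarrow> bool \<times> 'v) pmf" and D :: "nat \<Rightarrow> 'v pmf"
    and \<theta> :: "nat \<Rightarrow> 'v \<Rightarrow> real" and X :: "(nat \<Rightarrow> bool \<times> 'v) \<Rightarrow> real"
  assumes Qdef: "Q = Pi_pmf {..<M} (False, dv) (\<lambda>m. pair_pmf (bernoulli_pmf p) (D m))"
    and finD: "\<And>m. finite (set_pmf (D m))"
    and p: "0 \<le> p" "p \<le> 1"
    and thb: "\<And>m x. m < M \<Longrightarrow> x \<in> set_pmf (D m) \<Longrightarrow> \<bar>\<theta> m x\<bar> \<le> 1"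
    and XY: "\<And>q. q \<in> set_pmf Q \<Longrightarrow> sgn g * X q \<ge> (\<Sum>m<M. if fst (q m) then \<theta> m (snd (q m)) else 0) + K0"
    and Rdef: "R = p * (\<Sum>m<M. measure_pmf.expectation (D m) (\<theta> m)) + K0"
    and Rpos: "R > 0"
  shows "measure_pmf.expectation Q (\<lambda>q. g * sgn (X q)) \<ge> \<bar>g\<bar> * (1 - 2 * (real M * p) / R\<^sup>2)"
proof -
  define \<psi> where "\<psi> = (\<lambda>m (z :: bool \<times> 'v). (if fst z then 1 else 0) * \<theta> m (snd z))"
  define P where "P = (\<lambda>m. pair_pmf (bernoulli_pmf p) (D m))"
  have finP: "finite (set_pmf (P m))" for m
    unfolding P_def using finD by simp
  have finQ: "finite (set_pmf Q)" unfolding Qdef P_def[symmetric] by (intro finite_set_Pi_pmf finP) auto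
  note iQ = integrable_measure_pmf_finite[OF finQ]
  note iP = integrable_measure_pmf_finite[OF finP]
  have finB: "finite (set_pmf (bernoulli_pmf p))" by (rule finite_subset[of _ UNIV]) auto
  define e where "e = (\<lambda>m. measure_pmf.expectation (P m) (\<psi> m))"
  have e_eq: "e m = p * measure_pmf.expectation (D m) (\<theta> m)" for m
  proof -
    have "e m = measure_pmf.expectation (bernoulli_pmf p) (\<lambda>b. if b then 1 else 0) * measure_pmf.expectation (D m) (\<theta> m)"
      unfolding e_def P_def \<psi>_def by (rule expectation_pair_mult[OF finB finD])
    thus ?thesis using p by (simp add: expectation_bernoulli)
  qed
  define Y where "Y = (\<lambda>q. (\<Sum>m<M. \<psi> m (q m)) + K0)"
  have Yeq: "Y q = (\<Sum>m<M. if fst (q m) then \<theta> m (snd (q m)) else 0) + K0" for q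
    unfolding Y_def \<psi>_def by (intro arg_cong2[where f="(+)"] sum.cong) auto
  have EY: "measure_pmf.expectation Q Y = R"
  proof -
    have "measure_pmf.expectation Q Y = (\<Sum>m<M. measure_pmf.expectation Q (\<lambda>q. \<psi> m (q m))) + K0"
      unfolding Y_def by (simp add: Bochner_Integration.integral_add Bochner_Integration.integral_sum iQ measure_pmf.prob_space)
    also have "(\<Sum>m<M. measure_pmf.expectation Q (\<lambda>q. \<psi> m (q m))) = (\<Sum>m<M. e m)"
      unfolding Qdef P_def[symmetric] e_def by (intro sum.cong refl expectation_Pi_component) auto
    finally show ?thesis unfolding Rdef e_eq by (simp add: sum_distrib_left)
  qed
  have var: "measure_pmf.expectation Q (\<lambda>q. (Y q - R)\<^sup>2) \<le> real M * p"
  proof -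
    have "measure_pmf.expectation Q (\<lambda>q. (Y q - R)\<^sup>2)
        = measure_pmf.expectation Q (\<lambda>q. (\<Sum>m\<in>{..<M}. (\<lambda>m z. \<psi> m z - e m) m (q m))\<^sup>2)"
    proof (intro Bochner_Integration.integral_cong refl)
      fix q
      have "R = (\<Sum>m<M. e m) + K0" unfolding Rdef e_eq by (simp add: sum_distrib_left)
      thus "(Y q - R)\<^sup>2 = (\<Sum>m\<in>{..<M}. (\<lambda>m z. \<psi> m z - e m) m (q m))\<^sup>2"
        unfolding Y_def by (simp add: sum_subtractf)
    qed
    also have "\<dots> = (\<Sum>m\<in>{..<M}. measure_pmf.expectation (P m) (\<lambda>z. (\<psi> m z - e m)\<^sup>2))"
      unfolding Qdef P_def[symmetric]
    proof (rule var_Pi_pmf)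
      show "measure_pmf.expectation (P m) (\<lambda>z. \<psi> m z - e m) = 0" for m
        unfolding e_def by (simp add: Bochner_Integration.integral_diff iP measure_pmf.prob_space)
    qed (auto intro: finP)
    also have "\<dots> \<le> (\<Sum>m\<in>{..<M}. p)"
    proof (intro sum_mono)
      fix m assume m: "m \<in> {..<M}"
      have "measure_pmf.expectation (P m) (\<lambda>z. (\<psi> m z - e m)\<^sup>2)
          = measure_pmf.expectation (P m) (\<lambda>z. (\<psi> m z)\<^sup>2) - (e m)\<^sup>2"
      proof -
        have "measure_pmf.expectation (P m) (\<lambda>z. (\<psi> m z - e m)\<^sup>2)
           = measure_pmf.expectation (P m) (\<lambda>z. (\<psi> m z)\<^sup>2 - 2 * e m * \<psi> m z + (e m)\<^sup>2)"
          by (intro Bochner_Integration.integral_cong refl) (simp add: power2_diff)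
        also have "\<dots> = measure_pmf.expectation (P m) (\<lambda>z. (\<psi> m z)\<^sup>2) - 2 * e m * e m + (e m)\<^sup>2"
          unfolding e_def by (simp add: Bochner_Integration.integral_diff Bochner_Integration.integral_add iP measure_pmf.prob_space)
        finally show ?thesis by (simp add: power2_eq_square)
      qed
      also have "\<dots> \<le> measure_pmf.expectation (P m) (\<lambda>z. (\<psi> m z)\<^sup>2)" by simp
      also have "\<dots> \<le> measure_pmf.expectation (P m) (\<lambda>z. (if fst z then 1 else 0) * 1)"
      proof (intro integral_mono_AE iP AE_pmfI)
        fix z assume z: "z \<in> set_pmf (P m)"
        hence "snd z \<in> set_pmf (D m)" unfolding P_def by auto
        hence "\<bar>\<theta> m (snd z)\<bar> \<le> 1" using thb m by auto
        hence "(\<theta> m (snd z))\<^sup>2 \<le> 1" by (simp add: abs_square_le_1)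
        thus "(\<psi> m z)\<^sup>2 \<le> (if fst z then 1 else 0) * 1" unfolding \<psi>_def by auto
      qed
      also have "\<dots> = p"
      proof -
        have "measure_pmf.expectation (P m) (\<lambda>z. (if fst z then 1 else 0) * (\<lambda>_. 1) (snd z)) =
              measure_pmf.expectation (bernoulli_pmf p) (\<lambda>b. if b then 1 else 0) * measure_pmf.expectation (D m) (\<lambda>_. 1::real)"
          unfolding P_def by (rule expectation_pair_mult[OF finB finD])
        thus ?thesis using p by (simp add: expectation_bernoulli measure_pmf.prob_space)
      qed
      finally show "measure_pmf.expectation (P m) (\<lambda>z. (\<psi> m z - e m)\<^sup>2) \<le> p" .
    qed
    finally show ?thesis by simp
  qed
  have "measure_pmf.expectation Q (\<lambda>q. g * sgn (X q)) \<ge> \<bar>g\<bar> * (1 - 2 * measure_pmf.expectation Q (\<lambda>q. (Y q - R)\<^sup>2) / R\<^sup>2)"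
    using sign_lemma[OF finQ _ Rpos, where g=g and X=X and Y=Y] XY Yeq by auto
  also have "\<bar>g\<bar> * (1 - 2 * measure_pmf.expectation Q (\<lambda>q. (Y q - R)\<^sup>2) / R\<^sup>2) \<ge> \<bar>g\<bar> * (1 - 2 * (real M * p) / R\<^sup>2)"
    using var Rpos by (intro mult_left_mono) (auto intro!: divide_right_mono)
  finally show ?thesis .
qed




lemma numeric_R:
  fixes c p u c0 R :: real and M :: nat
  assumes c: "0 < c" "c < 3/5" and M: "M \<ge> 1" and p: "0 < p" "p \<le> 1" and u: "u > 0"
    and c0: "c0 \<ge> u / p * sqrt (8 * ln (6 / (3 - 5*c)))"
    and R: "R \<ge> (p * real M / u) * (2 * c0 / sqrt (real M)) / (1 + c)"
  shows "R > 0" "2 * (real M * p) / R\<^sup>2 \<le> 1 - c"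
proof -
  define L where "L = ln (6 / (3 - 5*c))"
  have L: "L \<ge> 2/3"
  proof -
    have "6 / (3 - 5*c) \<ge> 2" using c by (simp add: field_simps)
    hence "ln 2 \<le> L" unfolding L_def using c by (subst ln_le_cancel_iff) auto
    thus ?thesis using ln2_ge_two_thirds by linarith
  qed
  define sM where "sM = sqrt (real M)"
  have sM: "sM \<ge> 1" "sM * sM = real M" using M by (auto simp: sM_def)
  define A where "A = sqrt (8 * L)"
  have A: "A > 0" "A * A = 8 * L" using L by (auto simp: A_def)
  have c0A: "c0 * p / u \<ge> A" using c0 p u by (simp add: A_def L_def field_simps)
  have eq: "(p * real M / u) * (2 * c0 / sqrt (real M)) = 2 * sM * (c0 * p / u)"
    using sM u by (simp add: sM_def[symmetric] field_simps flip: sM(2))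
  define R0 where "R0 = 2 * sM * A / (1 + c)"
  have R0pos: "R0 > 0" using sM A c by (simp add: R0_def)
  have RR0: "R \<ge> R0"
  proof -
    have "2 * sM * A \<le> 2 * sM * (c0 * p / u)" using c0A sM by (intro mult_left_mono) auto
    hence "R0 \<le> 2 * sM * (c0 * p / u) / (1 + c)" unfolding R0_def using c by (intro divide_right_mono) auto
    moreover have "2 * sM * (c0 * p / u) / (1 + c) \<le> R" using R by (simp only: eq)
    ultimately show ?thesis by linarith
  qed
  show "R > 0" using RR0 R0pos by simp
  have R2: "R\<^sup>2 \<ge> R0\<^sup>2" using RR0 R0pos by (intro power_mono) auto
  have R0sq: "R0\<^sup>2 = 32 * real M * L / (1 + c)\<^sup>2"
    using sM A c by (simp add: R0_def power2_eq_square field_simps flip: sM(2))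
  have "2 * (real M * p) / R\<^sup>2 \<le> 2 * real M / R0\<^sup>2"
  proof -
    have "2 * (real M * p) \<le> 2 * real M" using p mult_left_mono[of p 1 "real M"] by simp
    moreover have "2 * real M / R\<^sup>2 \<le> 2 * real M / R0\<^sup>2"
    proof (rule divide_left_mono)
      show "0 < R\<^sup>2 * R0\<^sup>2" using R0pos RR0 by (intro mult_pos_pos) auto
    qed (use R2 in auto)
    ultimately show ?thesis using R0pos RR0
      by (meson divide_right_mono order.trans zero_le_power2)
  qed
  also have "\<dots> = (1 + c)\<^sup>2 / (16 * L)" unfolding R0sq using M L c by (simp add: field_simps)
  also have "\<dots> \<le> 1 - c"
  proof -
    have "(1 + c)\<^sup>2 \<le> (8/5)\<^sup>2" using c by (intro power_mono) auto
    moreover have "16 * L * (1 - c) \<ge> 16 * (2/3) * (2/5)"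
      using L c by (intro mult_mono) auto
    ultimately have "(1 + c)\<^sup>2 \<le> (1 - c) * (16 * L)" by (simp add: power2_eq_square algebra_simps)
    thus ?thesis using L by (simp add: divide_le_eq)
  qed
  finally show "2 * (real M * p) / R\<^sup>2 \<le> 1 - c" .
qed




locale sss_setting =
  fixes M n :: nat and p B \<beta> \<eta> :: real
    and gradf :: "nat \<Rightarrow> real^'d::finite \<Rightarrow> real^'d"
    and sd :: "nat \<Rightarrow> 'd \<Rightarrow> real"
    and Bsel :: "nat \<Rightarrow> (real^'d) list \<Rightarrow> nat set \<Rightarrow> nat set"
    and byz :: "nat \<Rightarrow> (real^'d) list \<Rightarrow> nat set \<Rightarrow> (nat \<Rightarrow> real^'d) \<Rightarrow> nat \<Rightarrow> real^'d"
    and \<tau> :: "nat \<Rightarrow> nat"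
  assumes M_pos: "M \<ge> 1" and n_pos: "n \<ge> 1" and p_pos: "0 < p" and p_le: "p \<le> 1"
    and beta_pos: "\<beta> > 0"
    and sd_nonneg: "\<And>m i. sd m i \<ge> 0"
    and grad_sd_lt: "\<And>m w i. m < M \<Longrightarrow> \<bar>gradf m w $ i\<bar> + sd m i < B"
    and Bsel_sub: "\<And>t h S. Bsel t h S \<subseteq> {..<M}"
    and Bsel_card: "\<And>t h S. card (Bsel t h S) = \<tau> t"
    and byz_sign: "\<And>t h S H m i. m \<in> S \<inter> Bsel t h S \<Longrightarrow> byz t h S H m $ i \<in> {-1, 1}"
begin

definition msg :: "nat \<Rightarrow> real^'d \<Rightarrow> (real^'d) pmf" where
  "msg m w = honest_msg n B \<beta> (\<lambda>i. gradf m w $ i) (sd m)"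

definition Qw :: "real^'d \<Rightarrow> (nat \<Rightarrow> bool \<times> (real^'d)) pmf" where
  "Qw w = Pi_pmf {..<M} (False, 0) (\<lambda>m. pair_pmf (bernoulli_pmf p) (msg m w))"

definition Sq :: "(nat \<Rightarrow> bool \<times> (real^'d)) \<Rightarrow> nat set" where
  "Sq q = {m. m < M \<and> fst (q m)}"

definition Hq :: "nat \<Rightarrow> (real^'d) list \<Rightarrow> (nat \<Rightarrow> bool \<times> (real^'d)) \<Rightarrow> nat \<Rightarrow> real^'d" where
  "Hq t h q = (\<lambda>m. if m \<in> Sq q - Bsel t h (Sq q) then snd (q m) else 0)"

definition vq :: "nat \<Rightarrow> (real^'d) list \<Rightarrow> (nat \<Rightarrow> bool \<times> (real^'d)) \<Rightarrow> nat \<Rightarrow> real^'d" where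
  "vq t h q = (\<lambda>m. if m \<in> Bsel t h (Sq q) then byz t h (Sq q) (Hq t h q) m else Hq t h q m)"

definition gt :: "nat \<Rightarrow> (real^'d) list \<Rightarrow> (nat \<Rightarrow> bool \<times> (real^'d)) \<Rightarrow> real^'d" where
  "gt t h q = (\<chi> i. sgn (\<Sum>m\<in>Sq q. vq t h q m $ i))"

lemma finite_Sq: "finite (Sq q)" unfolding Sq_def by auto

lemma Sq_sub: "Sq q \<subseteq> {..<M}" unfolding Sq_def by auto

lemma sgn_avg: "sgn (((1 / real (card S)) *\<^sub>R (\<Sum>m\<in>S. v m)) $ i) = sgn (\<Sum>m\<in>S. (v m :: real^'d) $ i)"
proof (cases "card S = 0")
  case True
  then show ?thesis by (cases "finite S") auto
next
  case False
  hence "real (card S) > 0" by simp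
  thus ?thesis by (simp add: sum_component sgn_mult)
qed

lemma step_eq:
  "sss_step M n p B \<beta> \<eta> gradf sd Bsel byz t h = map_pmf (\<lambda>q. h @ [last h - \<eta> *\<^sub>R gt t h q]) (Qw (last h))"
proof -
  define R where "R = (\<lambda>S H. let v = (\<lambda>m. if m \<in> Bsel t h S then byz t h S H m else H m);
                  avg = (1 / real (card S)) *\<^sub>R (\<Sum>m\<in>S. v m)
              in h @ [last h - \<eta> *\<^sub>R (\<chi> i. sgn (avg $ i))])"
  define toS where "toS = (\<lambda>b. {m. m < M \<and> b m})"
  define msgs where "msgs = (\<lambda>m. msg m (last h))"
  define restr where "restr = (\<lambda>b (f :: nat \<Rightarrow> real^'d) x. if x \<in> toS b - Bsel t h (toS b) then f x else 0)"
  have "sss_step M n p B \<beta> \<eta> gradf sd Bsel byz t h =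
        bind_pmf (part_pmf M p) (\<lambda>S. bind_pmf (Pi_pmf (S - Bsel t h S) 0 msgs) (\<lambda>H. return_pmf (R S H)))"
    by (simp add: sss_step_def R_def msgs_def msg_def)
  also have "\<dots> = bind_pmf (Pi_pmf {..<M} False (\<lambda>_. bernoulli_pmf p))
        (\<lambda>b. bind_pmf (Pi_pmf (toS b - Bsel t h (toS b)) 0 msgs) (\<lambda>H. return_pmf (R (toS b) H)))"
    unfolding part_pmf_def bind_map_pmf toS_def by simp
  also have "\<dots> = bind_pmf (Pi_pmf {..<M} False (\<lambda>_. bernoulli_pmf p))
        (\<lambda>b. bind_pmf (Pi_pmf {..<M} 0 msgs) (\<lambda>H. return_pmf (R (toS b) (restr b H))))"
  proof (rule bind_pmf_cong[OF refl])
    fix b assume "b \<in> set_pmf (Pi_pmf {..<M} False (\<lambda>_. bernoulli_pmf p))"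
    have "Pi_pmf (toS b - Bsel t h (toS b)) 0 msgs = map_pmf (restr b) (Pi_pmf {..<M} 0 msgs)"
      unfolding restr_def by (rule Pi_pmf_subset) (auto simp: toS_def)
    thus "bind_pmf (Pi_pmf (toS b - Bsel t h (toS b)) 0 msgs) (\<lambda>H. return_pmf (R (toS b) H)) =
          bind_pmf (Pi_pmf {..<M} 0 msgs) (\<lambda>H. return_pmf (R (toS b) (restr b H)))"
      by (simp add: bind_map_pmf)
  qed
  also have "\<dots> = map_pmf (\<lambda>(b, H). R (toS b) (restr b H)) (pair_pmf (Pi_pmf {..<M} False (\<lambda>_. bernoulli_pmf p)) (Pi_pmf {..<M} 0 msgs))"
    unfolding pair_pmf_def map_bind_pmf by simp
  also have "\<dots> = map_pmf (\<lambda>q. R (toS (fst \<circ> q)) (restr (fst \<circ> q) (snd \<circ> q))) (Qw (last h))"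
    unfolding Pi_pmf_pair[OF finite_lessThan] Qw_def msgs_def pmf.map_comp by (simp add: o_def)
  also have "\<dots> = map_pmf (\<lambda>q. h @ [last h - \<eta> *\<^sub>R gt t h q]) (Qw (last h))"
  proof (rule pmf.map_cong[OF refl])
    fix q assume "q \<in> set_pmf (Qw (last h))"
    have S: "toS (fst \<circ> q) = Sq q" unfolding toS_def Sq_def by auto
    have H: "restr (fst \<circ> q) (snd \<circ> q) = Hq t h q" unfolding restr_def Hq_def S by auto
    show "R (toS (fst \<circ> q)) (restr (fst \<circ> q) (snd \<circ> q)) = h @ [last h - \<eta> *\<^sub>R gt t h q]"
    proof -
      have v: "(\<lambda>m. if m \<in> Bsel t h (Sq q) then byz t h (Sq q) (Hq t h q) m else Hq t h q m) = vq t h q"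
        by (simp add: vq_def fun_eq_iff)
      show ?thesis unfolding S H R_def Let_def v gt_def sgn_avg by (simp add: vq_def)
    qed
  qed
  finally show ?thesis .
qed

lemma finite_msg: "finite (set_pmf (msg m w))"
  unfolding msg_def honest_msg_def by (simp add: finite_set_Pi_pmf)

lemma finite_Qw: "finite (set_pmf (Qw w))"
  unfolding Qw_def by (intro finite_set_Pi_pmf) (auto simp: finite_msg intro: finite_subset[of _ UNIV])

lemma finite_step: "finite (set_pmf (sss_step M n p B \<beta> \<eta> gradf sd Bsel byz t h))"
  unfolding step_eq by (simp add: finite_Qw)

lemma finite_proc: "finite (set_pmf (sss_proc M n p B \<beta> \<eta> gradf sd Bsel byz w0 t))"
  by (induction t) (auto simp: finite_step)

lemma msg_pm1: "x \<in> set_pmf (msg m w) \<Longrightarrow> x $ i \<in> {-1, 1}"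
  unfolding msg_def honest_msg_def by auto

lemma msg_mean:
  assumes "m < M"
  shows "measure_pmf.expectation (msg m w) (\<lambda>x. x $ i) = 2 * prob_one n B \<beta> (gradf m w $ i) (sd m i) - 1"
proof -
  let ?P = "prob_one n B \<beta> (gradf m w $ i) (sd m i)"
  have P01: "0 \<le> ?P" "?P \<le> 1"
    using prob_one_facts[OF n_pos sd_nonneg grad_sd_lt[OF assms] beta_pos] by auto
  have "measure_pmf.expectation (msg m w) (\<lambda>x. x $ i)
      = measure_pmf.expectation (Pi_pmf UNIV False (\<lambda>i. bernoulli_pmf (prob_one n B \<beta> (gradf m w $ i) (sd m i))))
          (\<lambda>b. (\<lambda>c. if c then 1 else -1) (b i))"
    unfolding msg_def honest_msg_def by simp
  also have "\<dots> = measure_pmf.expectation (bernoulli_pmf ?P) (\<lambda>c. if c then 1 else -1)"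
    by (rule expectation_Pi_component) auto
  also have "\<dots> = 2 * ?P - 1" using P01 by (simp add: expectation_bernoulli)
  finally show ?thesis .
qed

lemma alg_aux: "a * (x / k - y / k) - a * z / k = a * (x - y - z) / (k::real)"
  by (cases "k = 0") (simp_all add: field_simps)

lemma cancel_aux: "a \<noteq> 0 \<Longrightarrow> u \<noteq> 0 \<Longrightarrow> a / u * (k * u * x / a) = (k * x :: real)"
  by (simp add: field_simps)

lemma B_pos: "B > 0"
proof -
  have "\<bar>gradf 0 0 $ undefined\<bar> + sd 0 undefined < B" using grad_sd_lt M_pos by simp
  moreover have "\<bar>gradf 0 0 $ undefined\<bar> \<ge> 0" "sd 0 undefined \<ge> 0" using sd_nonneg by auto
  ultimately show ?thesis by linarith
qed

lemma c0_nonneg: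
  assumes c: "0 < c" "c < 3/5" and c0: "c0 \<ge> (B + \<beta>) / p * sqrt (8 * ln (6 / (3 - 5*c)))"
  shows "c0 \<ge> 0"
proof -
  have "6 / (3 - 5*c) > 1" using c by (simp add: field_simps)
  hence "ln (6 / (3 - 5*c)) > 0" by (rule ln_gt_zero)
  hence "sqrt (8 * ln (6 / (3 - 5*c))) \<ge> 0" by simp
  moreover have "(B + \<beta>) / p > 0" using B_pos beta_pos p_pos by simp
  ultimately show ?thesis using c0 by (meson mult_nonneg_nonneg less_imp_le order.trans)
qed

lemma Qw_support:
  assumes "q \<in> set_pmf (Qw w)" "m < M"
  shows "snd (q m) \<in> set_pmf (msg m w)"
  using assms unfolding Qw_def by (auto simp: set_Pi_pmf PiE_dflt_def)

lemma msg_mean_bound: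
  assumes "m < M"
  shows "\<bar>measure_pmf.expectation (msg m w) (\<lambda>x. x $ i)\<bar> \<le> 1"
proof -
  have "0 \<le> prob_one n B \<beta> (gradf m w $ i) (sd m i)" "prob_one n B \<beta> (gradf m w $ i) (sd m i) \<le> 1"
    using prob_one_facts[OF n_pos sd_nonneg grad_sd_lt[OF assms] beta_pos] by auto
  thus ?thesis unfolding msg_mean[OF assms] by auto
qed

lemma coord_generic:
  fixes w :: "real^'d" and c cc Ea Eb K Kz g :: real and X :: "(nat \<Rightarrow> bool \<times> (real^'d)) \<Rightarrow> real"
    and \<theta> :: "nat \<Rightarrow> real^'d \<Rightarrow> real"
  assumes c: "0 < c" "c < 3/5"
    and cc: "cc \<ge> (B + \<beta>) / p * sqrt (8 * ln (6 / (3 - 5*c)))"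
    and Ea: "Ea \<ge> 0" and Eb: "Eb \<ge> 0"
    and XY: "\<And>q. q \<in> set_pmf (Qw w) \<Longrightarrow> g \<noteq> 0 \<Longrightarrow> sgn g * X q \<ge> (\<Sum>m<M. if fst (q m) then \<theta> m (snd (q m)) else 0) + Kz"
    and thb: "\<And>m x. m < M \<Longrightarrow> x \<in> set_pmf (msg m w) \<Longrightarrow> \<bar>\<theta> m x\<bar> \<le> 1"
    and Rlow: "g \<noteq> 0 \<Longrightarrow> p * (\<Sum>m<M. measure_pmf.expectation (msg m w) (\<theta> m)) + Kz
                  \<ge> (p * real M / (B + \<beta>)) * (\<bar>g\<bar> - Ea / (1 + c)) - K"
    and K: "K \<le> (p * real M / (B + \<beta>)) * Eb / (1 + c)"
  shows "measure_pmf.expectation (Qw w) (\<lambda>q. g * sgn (X q)) \<ge> c * \<bar>g\<bar> - (Ea + 2 * cc / sqrt (real M) + Eb)"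
proof -
  define u where "u = B + \<beta>"
  have Bpos: "B > 0" by (rule B_pos)
  have upos: "u > 0" using Bpos beta_pos by (simp add: u_def)
  have c0pos: "cc \<ge> 0" by (rule c0_nonneg[OF c cc])
  define E2 where "E2 = 2 * cc / sqrt (real M)"
  have E2: "E2 \<ge> 0" using c0pos by (simp add: E2_def)
  define Err where "Err = Ea + E2 + Eb"
  note finQ = finite_Qw[of w]
  note iQ = integrable_measure_pmf_finite[OF finQ]
  show ?thesis
  proof (cases "(1 + c) * \<bar>g\<bar> \<le> Err")
    case True
    have "measure_pmf.expectation (Qw w) (\<lambda>q. - \<bar>g\<bar>) \<le> measure_pmf.expectation (Qw w) (\<lambda>q. g * sgn (X q))"
      by (intro integral_mono_AE iQ AE_pmfI) (auto simp: sgn_if abs_if)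
    hence "- \<bar>g\<bar> \<le> measure_pmf.expectation (Qw w) (\<lambda>q. g * sgn (X q))"
      by (simp add: measure_pmf.prob_space)
    thus ?thesis using True by (simp add: algebra_simps Err_def E2_def)
  next
    case False
    hence g0: "g \<noteq> 0" using Ea E2 Eb Err_def by auto
    define R where "R = p * (\<Sum>m<M. measure_pmf.expectation (msg m w) (\<theta> m)) + Kz"
    have pMu: "p * real M / u > 0" using p_pos M_pos upos by simp
    have gbig: "\<bar>g\<bar> \<ge> Err / (1 + c)" using False c by (simp add: field_simps)
    have h1: "R \<ge> (p * real M / u) * (\<bar>g\<bar> - Ea / (1 + c)) - (p * real M / u) * Eb / (1 + c)"
      using Rlow[OF g0] K unfolding R_def u_def by linarith
    have h2: "(p * real M / u) * (\<bar>g\<bar> - Ea / (1 + c)) \<ge> (p * real M / u) * (Err / (1 + c) - Ea / (1 + c))"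
      using gbig pMu by (intro mult_left_mono) auto
    from h1 h2 have "R \<ge> (p * real M / u) * (Err / (1 + c) - Ea / (1 + c)) - (p * real M / u) * Eb / (1 + c)"
      by linarith
    moreover have "(p * real M / u) * (Err / (1 + c) - Ea / (1 + c)) - (p * real M / u) * Eb / (1 + c)
        = (p * real M / u) * E2 / (1 + c)"
      unfolding Err_def using alg_aux[of "p * real M / u" "Ea + E2 + Eb" "1 + c" Ea Eb] by simp
    ultimately have RE2: "R \<ge> (p * real M / u) * (2 * cc / sqrt (real M)) / (1 + c)"
      unfolding E2_def by simp
    have Rpos: "R > 0" and Rb: "2 * (real M * p) / R\<^sup>2 \<le> 1 - c"
      using numeric_R[OF c M_pos p_pos p_le upos _ RE2] cc unfolding u_def by auto
    have "measure_pmf.expectation (Qw w) (\<lambda>q. g * sgn (X q)) \<ge> \<bar>g\<bar> * (1 - 2 * (real M * p) / R\<^sup>2)"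
    proof -
      have XY': "\<And>q. q \<in> set_pmf (Qw w) \<Longrightarrow> sgn g * X q \<ge> (\<Sum>m<M. if fst (q m) then \<theta> m (snd (q m)) else 0) + Kz"
        using XY g0 by blast
      have p0: "0 \<le> p" using p_pos by simp
      show ?thesis
        by (rule coord_bound[where D = "\<lambda>m. msg m w" and \<theta> = \<theta>, OF Qw_def finite_msg p0 p_le thb XY' R_def Rpos])
    qed
    also have "\<bar>g\<bar> * (1 - 2 * (real M * p) / R\<^sup>2) \<ge> \<bar>g\<bar> * c"
      using Rb by (intro mult_left_mono) auto
    finally show ?thesis using Ea E2 Eb by (simp add: algebra_simps Err_def E2_def)
  qed
qed

lemma X_split:
  fixes q t h i
  defines "S \<equiv> Sq q" and "Bs \<equiv> Bsel t h (Sq q)"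
  shows "(\<Sum>m\<in>S. vq t h q m $ i) = (\<Sum>m\<in>S - Bs. snd (q m) $ i) + (\<Sum>m\<in>S \<inter> Bs. byz t h S (Hq t h q) m $ i)"
proof -
  have fin: "finite S" unfolding S_def by (rule finite_Sq)
  have "S = (S - Bs) \<union> (S \<inter> Bs)" by auto
  hence "(\<Sum>m\<in>S. vq t h q m $ i) = (\<Sum>m\<in>S - Bs. vq t h q m $ i) + (\<Sum>m\<in>S \<inter> Bs. vq t h q m $ i)"
    using sum.Int_Diff[OF fin, of "\<lambda>m. vq t h q m $ i" Bs] by linarith
  also have "(\<Sum>m\<in>S - Bs. vq t h q m $ i) = (\<Sum>m\<in>S - Bs. snd (q m) $ i)"
    by (intro sum.cong refl) (auto simp: vq_def Hq_def S_def Bs_def)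
  also have "(\<Sum>m\<in>S \<inter> Bs. vq t h q m $ i) = (\<Sum>m\<in>S \<inter> Bs. byz t h S (Hq t h q) m $ i)"
    by (intro sum.cong refl) (auto simp: vq_def S_def Bs_def)
  finally show ?thesis .
qed

lemma byz_part:
  assumes s: "\<bar>s\<bar> = 1"
  shows "s * (\<Sum>m\<in>Sq q \<inter> Bsel t h (Sq q). byz t h (Sq q) (Hq t h q) m $ i) \<ge> - real (card (Sq q \<inter> Bsel t h (Sq q)))"
proof -
  have "s * (\<Sum>m\<in>Sq q \<inter> Bsel t h (Sq q). byz t h (Sq q) (Hq t h q) m $ i)
       = (\<Sum>m\<in>Sq q \<inter> Bsel t h (Sq q). s * byz t h (Sq q) (Hq t h q) m $ i)" by (simp add: sum_distrib_left)
  also have "\<dots> \<ge> (\<Sum>m\<in>Sq q \<inter> Bsel t h (Sq q). -1)"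
  proof (intro sum_mono)
    fix m assume "m \<in> Sq q \<inter> Bsel t h (Sq q)"
    hence "byz t h (Sq q) (Hq t h q) m $ i \<in> {-1, 1}" by (intro byz_sign) auto
    thus "-1 \<le> s * byz t h (Sq q) (Hq t h q) m $ i" using s by (auto simp: abs_if split: if_splits)
  qed
  finally show ?thesis by simp
qed

lemma sum_Sq: "(\<Sum>m\<in>Sq q. f m) = (\<Sum>m<M. if fst (q m) then f m else 0)"
proof -
  have e: "Sq q = {m \<in> {..<M}. fst (q m)}" unfolding Sq_def by auto
  show ?thesis unfolding e by (rule sum.inter_filter) simp
qed

lemma coord_adaptive:
  fixes w :: "real^'d" and c c0 E1 :: real and t :: nat and h i
  defines "g \<equiv> (1 / real M) * (\<Sum>m<M. gradf m w $ i)"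
  assumes c: "0 < c" "c < 3/5"
    and c0: "c0 \<ge> (B + \<beta>) / p * sqrt (8 * ln (6 / (3 - 5*c)))"
    and E1: "E1 \<ge> 0"
    and bias: "\<And>m. m < M \<Longrightarrow> \<bar>(B + \<beta>) * (2 * prob_one n B \<beta> (gradf m w $ i) (sd m i) - 1) - gradf m w $ i\<bar> \<le> E1 / (1 + c)"
  shows "measure_pmf.expectation (Qw w) (\<lambda>q. g * sgn (\<Sum>m\<in>Sq q. vq t h q m $ i))
     \<ge> c * \<bar>g\<bar> - (E1 + 2 * c0 / sqrt (real M) + 4 * (B + \<beta>) * real (\<tau> t) / (p * real M))"
proof (rule coord_generic[where \<theta> = "\<lambda>m x. sgn g * x $ i" and Kz = "- 2 * real (\<tau> t)" and K = "2 * real (\<tau> t)"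
    and Eb = "4 * (B + \<beta>) * real (\<tau> t) / (p * real M)" and Ea = E1 and cc = c0 and g = g
    and X = "\<lambda>q. \<Sum>m\<in>Sq q. vq t h q m $ i"])
  have Bpos: "B > 0" by (rule B_pos)
  have upos: "B + \<beta> > 0" using Bpos beta_pos by simp
  show "0 \<le> 4 * (B + \<beta>) * real (\<tau> t) / (p * real M)" using upos p_pos by simp
  show "2 * real (\<tau> t) \<le> p * real M / (B + \<beta>) * (4 * (B + \<beta>) * real (\<tau> t) / (p * real M)) / (1 + c)"
  proof -
    have "p * real M / (B + \<beta>) * (4 * (B + \<beta>) * real (\<tau> t) / (p * real M)) = 4 * real (\<tau> t)"
      using upos p_pos M_pos cancel_aux[of "p * real M" "B + \<beta>" 4 "real (\<tau> t)"] by simp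
    moreover have "2 * real (\<tau> t) \<le> 4 * real (\<tau> t) / (1 + c)"
      using c mult_right_mono[of c 1 "real (\<tau> t)"] by (simp add: field_simps)
    ultimately show ?thesis by simp
  qed
  show "\<bar>sgn g * x $ i\<bar> \<le> 1" if "m < M" "x \<in> set_pmf (msg m w)" for m x
    using msg_pm1[OF that(2), of i] by (auto simp: abs_mult abs_sgn_eq sgn_if)
  show "sgn g * (\<Sum>m\<in>Sq q. vq t h q m $ i) \<ge> (\<Sum>m<M. if fst (q m) then sgn g * snd (q m) $ i else 0) + - 2 * real (\<tau> t)"
    if q: "q \<in> set_pmf (Qw w)" and g0: "g \<noteq> 0" for q
  proof -
    define s where "s = sgn g"
    have s1: "\<bar>s\<bar> = 1" using g0 by (simp add: s_def abs_sgn_eq)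
    define S where "S = Sq q"
    define Bs where "Bs = Bsel t h S"
    have finS: "finite S" unfolding S_def by (rule finite_Sq)
    have xpm: "\<bar>snd (q m) $ i\<bar> \<le> 1" if "m \<in> S" for m
    proof -
      have "m < M" using that Sq_sub S_def by auto
      hence "snd (q m) $ i \<in> {-1, 1}" using msg_pm1 Qw_support[OF q] by blast
      thus ?thesis by auto
    qed
    have cardB: "card (S \<inter> Bs) \<le> \<tau> t"
    proof -
      have "card (S \<inter> Bs) \<le> card Bs" using Bsel_sub[of t h S] unfolding Bs_def by (intro card_mono) (auto intro: finite_subset)
      thus ?thesis using Bsel_card[of t h S] Bs_def by simp
    qed
    have split: "(\<Sum>m\<in>S. snd (q m) $ i) = (\<Sum>m\<in>S - Bs. snd (q m) $ i) + (\<Sum>m\<in>S \<inter> Bs. snd (q m) $ i)"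
      using sum.Int_Diff[OF finS, of "\<lambda>m. snd (q m) $ i" Bs] by linarith
    have hb: "s * (\<Sum>m\<in>S \<inter> Bs. snd (q m) $ i) \<le> real (card (S \<inter> Bs))"
    proof -
      have "s * (\<Sum>m\<in>S \<inter> Bs. snd (q m) $ i) = (\<Sum>m\<in>S \<inter> Bs. s * snd (q m) $ i)" by (simp add: sum_distrib_left)
      also have "\<dots> \<le> (\<Sum>m\<in>S \<inter> Bs. 1)"
      proof (intro sum_mono)
        fix m assume "m \<in> S \<inter> Bs"
        hence "\<bar>snd (q m) $ i\<bar> \<le> 1" using xpm by auto
        thus "s * snd (q m) $ i \<le> 1" using s1 by (simp add: abs_le_iff abs_if split: if_splits)
      qed
      finally show ?thesis by simp
    qed
    have xs: "s * (\<Sum>m\<in>Sq q. vq t h q m $ i) = s * (\<Sum>m\<in>S - Bs. snd (q m) $ i) + s * (\<Sum>m\<in>S \<inter> Bs. byz t h S (Hq t h q) m $ i)"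
      using X_split[of t h q i] unfolding S_def Bs_def by (simp add: distrib_left)
    have bp: "s * (\<Sum>m\<in>S \<inter> Bs. byz t h S (Hq t h q) m $ i) \<ge> - real (card (S \<inter> Bs))"
      using byz_part[OF s1, of q t h i] unfolding S_def Bs_def .
    have split_s: "s * (\<Sum>m\<in>S. snd (q m) $ i) = s * (\<Sum>m\<in>S - Bs. snd (q m) $ i) + s * (\<Sum>m\<in>S \<inter> Bs. snd (q m) $ i)"
      using split by (simp add: distrib_left)
    have "s * (\<Sum>m\<in>Sq q. vq t h q m $ i) \<ge> s * (\<Sum>m\<in>S. snd (q m) $ i) - 2 * real (\<tau> t)"
      using xs bp split_s hb cardB by linarith
    moreover have "s * (\<Sum>m\<in>S. snd (q m) $ i) = (\<Sum>m<M. if fst (q m) then s * snd (q m) $ i else 0)"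
      unfolding S_def sum_Sq sum_distrib_left by (intro sum.cong) auto
    ultimately show ?thesis unfolding s_def by linarith
  qed
  show "p * (\<Sum>m<M. measure_pmf.expectation (msg m w) (\<lambda>x. sgn g * x $ i)) + - 2 * real (\<tau> t)
     \<ge> p * real M / (B + \<beta>) * (\<bar>g\<bar> - E1 / (1 + c)) - 2 * real (\<tau> t)" if g0: "g \<noteq> 0"
  proof -
    define s where "s = sgn g"
    have s1: "\<bar>s\<bar> = 1" using g0 by (simp add: s_def abs_sgn_eq)
    have sg: "s * g = \<bar>g\<bar>" by (simp add: s_def sgn_mult_abs abs_sgn)
    have each: "measure_pmf.expectation (msg m w) (\<lambda>x. s * x $ i) \<ge> (s * gradf m w $ i - E1 / (1 + c)) / (B + \<beta>)"
      if m: "m < M" for m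
    proof -
      define P where "P = prob_one n B \<beta> (gradf m w $ i) (sd m i)"
      have e: "measure_pmf.expectation (msg m w) (\<lambda>x. s * x $ i) = s * (2 * P - 1)"
        using msg_mean[OF m, of w i] by (simp add: P_def)
      have b: "\<bar>(B + \<beta>) * (2 * P - 1) - gradf m w $ i\<bar> \<le> E1 / (1 + c)" using bias[OF m] by (simp add: P_def)
      have "s * gradf m w $ i - E1 / (1 + c) \<le> (B + \<beta>) * (s * (2 * P - 1))"
      proof -
        have "\<bar>s * ((B + \<beta>) * (2 * P - 1) - gradf m w $ i)\<bar> \<le> E1 / (1 + c)" using b s1 by (simp add: abs_mult)
        thus ?thesis by (simp add: algebra_simps abs_le_iff)
      qed
      thus ?thesis unfolding e using upos by (simp add: field_simps)
    qed
    have "(\<Sum>m<M. measure_pmf.expectation (msg m w) (\<lambda>x. s * x $ i)) \<ge> (\<Sum>m<M. (s * gradf m w $ i - E1 / (1 + c)) / (B + \<beta>))"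
      using each by (intro sum_mono) auto
    also have "(\<Sum>m<M. (s * gradf m w $ i - E1 / (1 + c)) / (B + \<beta>)) = real M / (B + \<beta>) * (\<bar>g\<bar> - E1 / (1 + c))"
    proof -
      have "(\<Sum>m<M. s * gradf m w $ i) = real M * (s * g)"
        unfolding g_def using M_pos by (simp add: sum_distrib_left field_simps)
      thus ?thesis unfolding sg by (simp add: sum_divide_distrib[symmetric] sum_subtractf field_simps)
    qed
    finally have "(\<Sum>m<M. measure_pmf.expectation (msg m w) (\<lambda>x. s * x $ i)) \<ge> real M / (B + \<beta>) * (\<bar>g\<bar> - E1 / (1 + c))" .
    hence "p * (\<Sum>m<M. measure_pmf.expectation (msg m w) (\<lambda>x. s * x $ i)) \<ge> p * (real M / (B + \<beta>) * (\<bar>g\<bar> - E1 / (1 + c)))"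
      using p_pos by (intro mult_left_mono) auto
    moreover have "p * real M / (B + \<beta>) * (\<bar>g\<bar> - E1 / (1 + c)) = p * (real M / (B + \<beta>) * (\<bar>g\<bar> - E1 / (1 + c)))"
      by simp
    ultimately show ?thesis unfolding s_def by linarith
  qed
next
  show "0 < c" "c < 3/5" using c by auto
  show "(B + \<beta>) / p * sqrt (8 * ln (6 / (3 - 5 * c))) \<le> c0" by (rule c0)
  show "0 \<le> E1" by (rule E1)
qed

lemma mean_lower:
  fixes w :: "real^'d" and c E1 :: real and i
  defines "g \<equiv> (1 / real M) * (\<Sum>m<M. gradf m w $ i)"
  assumes c: "0 < c"
    and bias: "\<And>m. m < M \<Longrightarrow> \<bar>(B + \<beta>) * (2 * prob_one n B \<beta> (gradf m w $ i) (sd m i) - 1) - gradf m w $ i\<bar> \<le> E1 / (1 + c)"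
    and g0: "g \<noteq> 0"
  shows "(\<Sum>m<M. sgn g * measure_pmf.expectation (msg m w) (\<lambda>x. x $ i)) \<ge> real M / (B + \<beta>) * (\<bar>g\<bar> - E1 / (1 + c))"
proof -
  have upos: "B + \<beta> > 0" using B_pos beta_pos by simp
  define s where "s = sgn g"
  have s1: "\<bar>s\<bar> = 1" using g0 by (simp add: s_def abs_sgn_eq)
  have sg: "s * g = \<bar>g\<bar>" by (simp add: s_def sgn_mult_abs abs_sgn)
  have each: "s * measure_pmf.expectation (msg m w) (\<lambda>x. x $ i) \<ge> (s * gradf m w $ i - E1 / (1 + c)) / (B + \<beta>)"
    if m: "m < M" for m
  proof -
    define P where "P = prob_one n B \<beta> (gradf m w $ i) (sd m i)"
    have e: "s * measure_pmf.expectation (msg m w) (\<lambda>x. x $ i) = s * (2 * P - 1)"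
      using msg_mean[OF m, of w i] by (simp add: P_def)
    have b: "\<bar>(B + \<beta>) * (2 * P - 1) - gradf m w $ i\<bar> \<le> E1 / (1 + c)" using bias[OF m] by (simp add: P_def)
    have "s * gradf m w $ i - E1 / (1 + c) \<le> (B + \<beta>) * (s * (2 * P - 1))"
    proof -
      have "\<bar>s * ((B + \<beta>) * (2 * P - 1) - gradf m w $ i)\<bar> \<le> E1 / (1 + c)" using b s1 by (simp add: abs_mult)
      thus ?thesis by (simp add: algebra_simps abs_le_iff)
    qed
    thus ?thesis unfolding e using upos by (simp add: field_simps)
  qed
  have "(\<Sum>m<M. s * measure_pmf.expectation (msg m w) (\<lambda>x. x $ i)) \<ge> (\<Sum>m<M. (s * gradf m w $ i - E1 / (1 + c)) / (B + \<beta>))"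
    using each by (intro sum_mono) auto
  also have "(\<Sum>m<M. (s * gradf m w $ i - E1 / (1 + c)) / (B + \<beta>)) = real M / (B + \<beta>) * (\<bar>g\<bar> - E1 / (1 + c))"
  proof -
    have "(\<Sum>m<M. s * gradf m w $ i) = real M * (s * g)"
      unfolding g_def using M_pos by (simp add: sum_distrib_left field_simps)
    thus ?thesis unfolding sg by (simp add: sum_divide_distrib[symmetric] sum_subtractf field_simps)
  qed
  finally show ?thesis unfolding s_def .
qed

lemma coord_static:
  fixes w :: "real^'d" and c c0 E1 :: real and t :: nat and h i
  defines "g \<equiv> (1 / real M) * (\<Sum>m<M. gradf m w $ i)"
  assumes c: "0 < c" "c < 3/5"
    and c0: "c0 \<ge> (B + \<beta>) / p * sqrt (8 * ln (6 / (3 - 5*c)))"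
    and E1: "E1 \<ge> 0"
    and bias: "\<And>m. m < M \<Longrightarrow> \<bar>(B + \<beta>) * (2 * prob_one n B \<beta> (gradf m w $ i) (sd m i) - 1) - gradf m w $ i\<bar> \<le> E1 / (1 + c)"
    and static: "\<And>S. Bsel t h S = Bf"
  shows "measure_pmf.expectation (Qw w) (\<lambda>q. g * sgn (\<Sum>m\<in>Sq q. vq t h q m $ i))
     \<ge> c * \<bar>g\<bar> - (E1 + 2 * c0 / sqrt (real M) + 6 * (B + \<beta>) * real (\<tau> t) / real M)"
proof (rule coord_generic[where \<theta> = "\<lambda>m x. if m \<in> Bf then -1 else sgn g * x $ i" and Kz = 0 and K = "2 * p * real (\<tau> t)"
    and Eb = "6 * (B + \<beta>) * real (\<tau> t) / real M" and Ea = E1 and cc = c0 and g = g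
    and X = "\<lambda>q. \<Sum>m\<in>Sq q. vq t h q m $ i"])
  have Bpos: "B > 0" by (rule B_pos)
  have upos: "B + \<beta> > 0" using Bpos beta_pos by simp
  have BfM: "Bf \<subseteq> {..<M}" using Bsel_sub[of t h "{}"] static by simp
  have cardBf: "card Bf = \<tau> t" using Bsel_card[of t h "{}"] static by simp
  show "0 \<le> 6 * (B + \<beta>) * real (\<tau> t) / real M" using upos by simp
  show "2 * p * real (\<tau> t) \<le> p * real M / (B + \<beta>) * (6 * (B + \<beta>) * real (\<tau> t) / real M) / (1 + c)"
  proof -
    have "p * real M / (B + \<beta>) * (6 * (B + \<beta>) * real (\<tau> t) / real M) = 6 * (p * real (\<tau> t))"
      using upos p_pos M_pos cancel_aux[of "real M" "B + \<beta>" 6 "p * real (\<tau> t)"] by (simp add: field_simps)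
    moreover have "2 * p * real (\<tau> t) \<le> 6 * (p * real (\<tau> t)) / (1 + c)"
      using c mult_right_mono[of c 1 "p * real (\<tau> t)"] p_pos by (simp add: field_simps)
    ultimately show ?thesis by simp
  qed
  show "\<bar>(if m \<in> Bf then -1 else sgn g * x $ i)\<bar> \<le> 1" if "m < M" "x \<in> set_pmf (msg m w)" for m x
    using msg_pm1[OF that(2), of i] by (auto simp: abs_mult abs_sgn_eq sgn_if)
  show "sgn g * (\<Sum>m\<in>Sq q. vq t h q m $ i) \<ge> (\<Sum>m<M. if fst (q m) then (if m \<in> Bf then -1 else sgn g * snd (q m) $ i) else 0) + 0"
    if q: "q \<in> set_pmf (Qw w)" and g0: "g \<noteq> 0" for q
  proof -
    define s where "s = sgn g"
    have s1: "\<bar>s\<bar> = 1" using g0 by (simp add: s_def abs_sgn_eq)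
    define S where "S = Sq q"
    have Bs: "Bsel t h S = Bf" by (rule static)
    have finS: "finite S" unfolding S_def by (rule finite_Sq)
    have xs: "s * (\<Sum>m\<in>Sq q. vq t h q m $ i) = s * (\<Sum>m\<in>S - Bf. snd (q m) $ i) + s * (\<Sum>m\<in>S \<inter> Bf. byz t h S (Hq t h q) m $ i)"
      using X_split[of t h q i] unfolding S_def[symmetric] Bs by (simp add: distrib_left)
    have bp: "s * (\<Sum>m\<in>S \<inter> Bf. byz t h S (Hq t h q) m $ i) \<ge> - real (card (S \<inter> Bf))"
      using byz_part[OF s1, of q t h i] unfolding S_def[symmetric] Bs .
    have "(\<Sum>m<M. if fst (q m) then (if m \<in> Bf then -1 else s * snd (q m) $ i) else 0)
        = (\<Sum>m\<in>S. (if m \<in> Bf then -1 else s * snd (q m) $ i))"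
      unfolding S_def sum_Sq ..
    also have "\<dots> = (\<Sum>m\<in>S \<inter> Bf. (if m \<in> Bf then -1 else s * snd (q m) $ i)) + (\<Sum>m\<in>S - Bf. (if m \<in> Bf then -1 else s * snd (q m) $ i))"
      by (rule sum.Int_Diff[OF finS])
    also have "(\<Sum>m\<in>S \<inter> Bf. (if m \<in> Bf then -1 else s * snd (q m) $ i)) = - real (card (S \<inter> Bf))"
      by simp
    also have "(\<Sum>m\<in>S - Bf. (if m \<in> Bf then -1 else s * snd (q m) $ i)) = s * (\<Sum>m\<in>S - Bf. snd (q m) $ i)"
      by (simp add: sum_distrib_left)
    finally show ?thesis using xs bp unfolding s_def by linarith
  qed
  show "p * (\<Sum>m<M. measure_pmf.expectation (msg m w) (\<lambda>x. if m \<in> Bf then -1 else sgn g * x $ i)) + 0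
     \<ge> p * real M / (B + \<beta>) * (\<bar>g\<bar> - E1 / (1 + c)) - 2 * p * real (\<tau> t)" if g0: "g \<noteq> 0"
  proof -
    define e where "e = (\<lambda>m. sgn g * measure_pmf.expectation (msg m w) (\<lambda>x. x $ i))"
    have eb: "e m \<le> 1" if "m < M" for m
    proof -
      have "\<bar>e m\<bar> \<le> 1" unfolding e_def using msg_mean_bound[OF that, of w i]
        by (auto simp: abs_mult sgn_if)
      thus ?thesis by simp
    qed
    have "(\<Sum>m<M. measure_pmf.expectation (msg m w) (\<lambda>x. if m \<in> Bf then -1 else sgn g * x $ i))
        = (\<Sum>m<M. if m \<in> Bf then -1 else e m)"
      unfolding e_def by (intro sum.cong refl) auto
    also have "\<dots> = (\<Sum>m<M. e m) - (\<Sum>m\<in>Bf. e m + 1)"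
    proof -
      have "(\<Sum>m<M. if m \<in> Bf then -1 else e m) = (\<Sum>m<M. e m - (if m \<in> Bf then e m + 1 else 0))"
        by (intro sum.cong) auto
      also have "\<dots> = (\<Sum>m<M. e m) - (\<Sum>m\<in>{..<M} \<inter> Bf. e m + 1)"
        by (simp add: sum_subtractf sum.inter_restrict)
      also have "{..<M} \<inter> Bf = Bf" using BfM by auto
      finally show ?thesis .
    qed
    also have "\<dots> \<ge> (\<Sum>m<M. e m) - (\<Sum>m\<in>Bf. 2)"
    proof -
      have "(\<Sum>m\<in>Bf. e m + 1) \<le> (\<Sum>m\<in>Bf. 2)" using eb BfM by (intro sum_mono) force
      thus ?thesis by linarith
    qed
    finally have "(\<Sum>m<M. measure_pmf.expectation (msg m w) (\<lambda>x. if m \<in> Bf then -1 else sgn g * x $ i))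
        \<ge> (\<Sum>m<M. e m) - 2 * real (\<tau> t)" using cardBf by simp
    moreover have "(\<Sum>m<M. e m) \<ge> real M / (B + \<beta>) * (\<bar>g\<bar> - E1 / (1 + c))"
      unfolding e_def g_def by (rule mean_lower[OF c(1) bias g0[unfolded g_def]])
    ultimately have "(\<Sum>m<M. measure_pmf.expectation (msg m w) (\<lambda>x. if m \<in> Bf then -1 else sgn g * x $ i))
        \<ge> real M / (B + \<beta>) * (\<bar>g\<bar> - E1 / (1 + c)) - 2 * real (\<tau> t)" by linarith
    hence "p * (\<Sum>m<M. measure_pmf.expectation (msg m w) (\<lambda>x. if m \<in> Bf then -1 else sgn g * x $ i))
        \<ge> p * (real M / (B + \<beta>) * (\<bar>g\<bar> - E1 / (1 + c)) - 2 * real (\<tau> t))"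
      using p_pos by (intro mult_left_mono) auto
    moreover have "p * (real M / (B + \<beta>) * (\<bar>g\<bar> - E1 / (1 + c)) - 2 * real (\<tau> t))
       = p * real M / (B + \<beta>) * (\<bar>g\<bar> - E1 / (1 + c)) - 2 * p * real (\<tau> t)"
      by (simp only: right_diff_distrib times_divide_eq_right times_divide_eq_left mult.assoc mult.left_commute)
    ultimately show ?thesis by linarith
  qed
next
  show "0 < c" "c < 3/5" using c by auto
  show "(B + \<beta>) / p * sqrt (8 * ln (6 / (3 - 5 * c))) \<le> c0" by (rule c0)
  show "0 \<le> E1" by (rule E1)
qed

lemma step_descent:
  fixes F :: "real^'d \<Rightarrow> real" and gF :: "real^'d \<Rightarrow> real^'d" and L Err c :: real and t h
  assumes smooth: "\<And>w1 w2. F w1 \<le> F w2 + inner (gF w2) (w1 - w2) + L / 2 * (norm (w1 - w2))\<^sup>2"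
    and L: "L \<ge> 0" and eta: "\<eta> > 0"
    and coord: "\<And>i. measure_pmf.expectation (Qw (last h)) (\<lambda>q. gF (last h) $ i * sgn (\<Sum>m\<in>Sq q. vq t h q m $ i))
                    \<ge> c * \<bar>gF (last h) $ i\<bar> - Err"
  shows "measure_pmf.expectation (sss_step M n p B \<beta> \<eta> gradf sd Bsel byz t h) (\<lambda>h'. F (last h'))
      \<le> F (last h) - \<eta> * c * l1norm (gF (last h)) + \<eta> * real CARD('d) * Err + L / 2 * \<eta>\<^sup>2 * real CARD('d)"
proof -
  define w where "w = last h"
  define Q where "Q = Qw w"
  note finQ = finite_Qw[of w]
  note iQ = integrable_measure_pmf_finite[OF finQ]
  define s where "s = (\<lambda>q i. sgn (\<Sum>m\<in>Sq q. vq t h q m $ i))"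
  have gt_s: "gt t h q $ i = s q i" for q i by (simp add: gt_def s_def)
  have pw: "F (w - \<eta> *\<^sub>R gt t h q) \<le> F w - \<eta> * (\<Sum>i\<in>UNIV. gF w $ i * s q i) + L / 2 * \<eta>\<^sup>2 * real CARD('d)" for q
  proof -
    have "F (w - \<eta> *\<^sub>R gt t h q) \<le> F w + inner (gF w) ((w - \<eta> *\<^sub>R gt t h q) - w) + L / 2 * (norm ((w - \<eta> *\<^sub>R gt t h q) - w))\<^sup>2"
      by (rule smooth)
    also have "inner (gF w) ((w - \<eta> *\<^sub>R gt t h q) - w) = - \<eta> * (\<Sum>i\<in>UNIV. gF w $ i * s q i)"
      by (simp add: inner_vec_def gt_s sum_distrib_left algebra_simps)
    also have "(norm ((w - \<eta> *\<^sub>R gt t h q) - w))\<^sup>2 = \<eta>\<^sup>2 * (\<Sum>i\<in>UNIV. (s q i)\<^sup>2)"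
      by (simp only: power2_norm_eq_inner) (simp add: inner_vec_def gt_s sum_distrib_left power2_eq_square algebra_simps)
    also have "(\<Sum>i\<in>UNIV. (s q i)\<^sup>2) \<le> (\<Sum>i\<in>(UNIV::'d set). 1)"
      by (intro sum_mono) (auto simp: s_def sgn_if)
    finally have "F (w - \<eta> *\<^sub>R gt t h q) \<le> F w + - \<eta> * (\<Sum>i\<in>UNIV. gF w $ i * s q i) + L / 2 * (\<eta>\<^sup>2 * real CARD('d))"
      using L by (simp add: mult_left_mono)
    thus ?thesis by simp
  qed
  have "measure_pmf.expectation (sss_step M n p B \<beta> \<eta> gradf sd Bsel byz t h) (\<lambda>h'. F (last h'))
      = measure_pmf.expectation Q (\<lambda>q. F (w - \<eta> *\<^sub>R gt t h q))"
    unfolding step_eq Q_def w_def by simp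
  also have "\<dots> \<le> measure_pmf.expectation Q (\<lambda>q. F w - \<eta> * (\<Sum>i\<in>UNIV. gF w $ i * s q i) + L / 2 * \<eta>\<^sup>2 * real CARD('d))"
    unfolding Q_def by (intro integral_mono_AE iQ AE_pmfI pw)
  also have "\<dots> = F w - \<eta> * (\<Sum>i\<in>UNIV. measure_pmf.expectation Q (\<lambda>q. gF w $ i * s q i)) + L / 2 * \<eta>\<^sup>2 * real CARD('d)"
    unfolding Q_def
    by (simp add: Bochner_Integration.integral_add Bochner_Integration.integral_diff Bochner_Integration.integral_sum iQ measure_pmf.prob_space)
  also have "\<dots> \<le> F w - \<eta> * (\<Sum>i\<in>UNIV. c * \<bar>gF w $ i\<bar> - Err) + L / 2 * \<eta>\<^sup>2 * real CARD('d)"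
  proof -
    have "(\<Sum>i\<in>UNIV. c * \<bar>gF w $ i\<bar> - Err) \<le> (\<Sum>i\<in>UNIV. measure_pmf.expectation Q (\<lambda>q. gF w $ i * s q i))"
      using coord unfolding Q_def w_def s_def by (intro sum_mono) auto
    thus ?thesis using eta by (simp add: mult_left_mono)
  qed
  also have "\<dots> = F w - \<eta> * c * l1norm (gF w) + \<eta> * real CARD('d) * Err + L / 2 * \<eta>\<^sup>2 * real CARD('d)"
    by (simp add: l1norm_def sum_subtractf sum_distrib_left algebra_simps)
  finally show ?thesis unfolding w_def .
qed

lemma telescope:
  fixes F :: "real^'d \<Rightarrow> real" and G :: "real^'d \<Rightarrow> real" and Errt :: "nat \<Rightarrow> real" and Cst Fstar a :: real and T :: nat
  assumes step: "\<And>t h. measure_pmf.expectation (sss_step M n p B \<beta> \<eta> gradf sd Bsel byz t h) (\<lambda>h'. F (last h'))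
                    \<le> F (last h) - a * G (last h) + Errt t"
    and lower: "\<And>w. F w \<ge> Fstar"
  shows "a * (\<Sum>t<T. measure_pmf.expectation (sss_proc M n p B \<beta> \<eta> gradf sd Bsel byz w0 t) (\<lambda>h. G (last h)))
      \<le> F w0 - Fstar + (\<Sum>t<T. Errt t)"
proof -
  define P where "P = (\<lambda>t. sss_proc M n p B \<beta> \<eta> gradf sd Bsel byz w0 t)"
  define \<Phi> where "\<Phi> = (\<lambda>t. measure_pmf.expectation (P t) (\<lambda>h. F (last h)))"
  have finP: "finite (set_pmf (P t))" for t unfolding P_def by (rule finite_proc)
  have rec: "\<Phi> (Suc t) \<le> \<Phi> t - a * measure_pmf.expectation (P t) (\<lambda>h. G (last h)) + Errt t" for t
  proof -
    have "\<Phi> (Suc t) = measure_pmf.expectation (P t) (\<lambda>h. measure_pmf.expectation (sss_step M n p B \<beta> \<eta> gradf sd Bsel byz t h) (\<lambda>h'. F (last h')))"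
      unfolding \<Phi>_def P_def by (simp, intro expectation_bind_fin finite_proc finite_step)
    also have "\<dots> \<le> measure_pmf.expectation (P t) (\<lambda>h. F (last h) - a * G (last h) + Errt t)"
      by (intro integral_mono_AE integrable_measure_pmf_finite[OF finP] AE_pmfI step)
    also have "\<dots> = \<Phi> t - a * measure_pmf.expectation (P t) (\<lambda>h. G (last h)) + Errt t"
      unfolding \<Phi>_def
      by (simp add: Bochner_Integration.integral_add Bochner_Integration.integral_diff integrable_measure_pmf_finite[OF finP] measure_pmf.prob_space)
    finally show ?thesis .
  qed
  have ind: "\<Phi> T + a * (\<Sum>t<T. measure_pmf.expectation (P t) (\<lambda>h. G (last h))) \<le> \<Phi> 0 + (\<Sum>t<T. Errt t)"
  proof (induction T)
    case 0 then show ?case by simp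
  next
    case (Suc T) then show ?case using rec[of T] by (simp add: distrib_left)
  qed
  have "\<Phi> 0 = F w0" unfolding \<Phi>_def P_def by simp
  moreover have "\<Phi> T \<ge> Fstar"
  proof -
    have "measure_pmf.expectation (P T) (\<lambda>h. Fstar) \<le> \<Phi> T"
      unfolding \<Phi>_def by (intro integral_mono_AE integrable_measure_pmf_finite[OF finP] AE_pmfI lower)
    thus ?thesis by (simp add: measure_pmf.prob_space)
  qed
  ultimately show ?thesis using ind unfolding P_def by linarith
qed

end





lemma final_alg:
  fixes \<eta> c d A L E1 E2 G :: real and K :: "nat \<Rightarrow> real" and T :: nat
  assumes T: "T \<ge> 1" and d: "d > 0" and c: "c > 0" and eta: "\<eta> = 1 / sqrt (d * real T)"
    and H: "\<eta> * c * G \<le> A + (\<Sum>t<T. \<eta> * d * (E1 + E2 + K t) + L / 2 * \<eta>\<^sup>2 * d)"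
  shows "(1 / real T) * G \<le> (1 / c) * (A * sqrt d / sqrt (real T) + L * sqrt d / (2 * sqrt (real T))
           + d * E1 + d * E2 + d * (\<Sum>t<T. K t) / real T)"
proof -
  have Tp: "real T > 0" using T by simp
  have sT: "sqrt (real T) > 0" using Tp by simp
  have sd: "sqrt d > 0" using d by simp
  have etap: "\<eta> > 0" using eta d Tp by simp
  have k1: "\<eta> * sqrt d * sqrt (real T) = 1" using eta d Tp by (simp add: real_sqrt_mult)
  have k2: "\<eta>\<^sup>2 * d * real T = 1"
  proof -
    have "(\<eta> * sqrt d * sqrt (real T))\<^sup>2 = 1" using k1 by simp
    thus ?thesis using d Tp by (simp add: power_mult_distrib)
  qed
  define X where "X = A * sqrt d / sqrt (real T) + L * sqrt d / (2 * sqrt (real T)) + d * E1 + d * E2 + d * (\<Sum>t<T. K t) / real T"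
  have sumeq: "(\<Sum>t<T. \<eta> * d * (E1 + E2 + K t) + L / 2 * \<eta>\<^sup>2 * d)
      = \<eta> * d * real T * (E1 + E2) + \<eta> * d * (\<Sum>t<T. K t) + L / 2 * (\<eta>\<^sup>2 * d * real T)"
    by (simp add: sum.distrib sum_distrib_left algebra_simps)
  have TX: "\<eta> * real T * X = A + \<eta> * d * real T * (E1 + E2) + \<eta> * d * (\<Sum>t<T. K t) + L / 2"
  proof -
    have a1: "\<eta> * real T * (A * sqrt d / sqrt (real T)) = A * (\<eta> * sqrt d * sqrt (real T))"
      using sT by (simp add: field_simps)
    have a2: "\<eta> * real T * (L * sqrt d / (2 * sqrt (real T))) = L / 2 * (\<eta> * sqrt d * sqrt (real T))"
      using sT by (simp add: field_simps)
    have a3: "\<eta> * real T * (d * (\<Sum>t<T. K t) / real T) = \<eta> * d * (\<Sum>t<T. K t)"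
      using Tp by (simp add: field_simps)
    show ?thesis unfolding X_def distrib_left a1 a2 a3 k1 by (simp add: algebra_simps)
  qed
  have "\<eta> * c * G \<le> \<eta> * real T * X" using H unfolding sumeq TX k2 by simp
  hence "c * G \<le> real T * X" using etap by (simp add: mult.assoc)
  hence "G \<le> real T * X / c" using c by (simp add: field_simps)
  hence "G / real T \<le> X / c" using Tp c by (simp add: field_simps)
  thus ?thesis unfolding X_def by simp
qed

theorem corollary2:
  fixes M n T :: nat
    and p \<beta> \<epsilon>0 c L Fstar \<sigma> B0 B \<eta> c0 :: real
    and f :: "nat \<Rightarrow> real^'d::finite \<Rightarrow> real"
    and gradf :: "nat \<Rightarrow> real^'d \<Rightarrow> real^'d"
    and Bi :: "'d \<Rightarrow> real"
    and sd :: "nat \<Rightarrow> 'd \<Rightarrow> real"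
    and w0 :: "real^'d"
    and \<tau> :: "nat \<Rightarrow> nat"
    and adaptive :: bool
    and Bsel :: "nat \<Rightarrow> (real^'d) list \<Rightarrow> nat set \<Rightarrow> nat set"
    and byz :: "nat \<Rightarrow> (real^'d) list \<Rightarrow> nat set \<Rightarrow> (nat \<Rightarrow> real^'d) \<Rightarrow> nat \<Rightarrow> real^'d"
  defines "F \<equiv> (\<lambda>w. (1 / real M) * (\<Sum>m<M. f m w))"
    and "gradF \<equiv> (\<lambda>w. (1 / real M) *\<^sub>R (\<Sum>m<M. gradf m w))"
    and "d \<equiv> real CARD('d)"
  assumes M_pos: "M \<ge> 1" and n_pos: "n \<ge> 1" and T_pos: "T \<ge> 1"
    and p_range: "0 < p" "p \<le> 1" and beta_pos: "\<beta> > 0"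
    (* differentiability of the local functions, with gradients gradf *)
    and grad: "\<And>m w. m < M \<Longrightarrow> GDERIV (f m) w :> gradf m w"
    (* lower bound *)
    and lower: "\<And>w. F w \<ge> Fstar"
    (* smoothness *)
    and L_nonneg: "L \<ge> 0"
    and smooth: "\<And>w1 w2. F w1 \<le> F w2 + inner (gradF w2) (w1 - w2) + L / 2 * (norm (w1 - w2))\<^sup>2"
    (* bounded true gradient *)
    and Bi_pos: "\<And>i. Bi i > 0"
    and Bi_bound: "\<And>m w i. m < M \<Longrightarrow> \<bar>gradf m w $ i\<bar> \<le> Bi i"
    and B0_def: "B0 = Max (range Bi)"
    (* Gaussian noise: standard deviations sd m i, sigma^2 = max variance *)
    and sd_nonneg: "\<And>m i. sd m i \<ge> 0"
    and sigma_def: "\<sigma> = Max {sd m i | m i. m < M}"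
    (* parameters *)
    and B_def: "B = (1 + \<epsilon>0) * B0"
    and eps_gt: "\<epsilon>0 > \<sigma> / B0"
    and c_range: "0 < c" "c < 3 / 5"
    and eta_def: "\<eta> = 1 / sqrt (d * real T)"
    and c0_def: "c0 = max (sqrt (8 * \<sigma>\<^sup>2 / real n * ln (6 / c)))
                         (sqrt (8 * (B + \<beta>)\<^sup>2 / p\<^sup>2 * ln (6 / (3 - 5 * c))))"
    (* adversary *)
    and static_if_not_adaptive: "\<not> adaptive \<Longrightarrow> static_adv Bsel"
    and Bsel_sub: "\<And>t h S. Bsel t h S \<subseteq> {..<M}"
    and Bsel_card: "\<And>t h S. card (Bsel t h S) = \<tau> t"
    and byz_sign: "\<And>t h S H m i. m \<in> S \<inter> Bsel t h S \<Longrightarrow> byz t h S H m $ i \<in> {-1, 1}"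
  shows
    "((adaptive \<or> (\<forall>t<T. real (\<tau> t) \<le> 2 / p\<^sup>2 * ln (6 / c))) \<longrightarrow>
       (1 / real T) * (\<Sum>t<T. measure_pmf.expectation (sss_proc M n p B \<beta> \<eta> gradf sd Bsel byz w0 t)
                                  (\<lambda>h. l1norm (gradF (last h))))
       \<le> (1 / c) * ((F w0 - Fstar) * sqrt d / sqrt (real T) + L * sqrt d / (2 * sqrt (real T))
             + d / sqrt (2 * pi) * (B + \<beta>) * exp (- real n / 2) + 2 * d * c0 / sqrt (real M)
             + 4 * d * (B + \<beta>) * (\<Sum>t<T. real (\<tau> t)) / (p * real T * real M)))
     \<and>
     ((\<not> adaptive \<and> (\<forall>t<T. real (\<tau> t) > 2 / p\<^sup>2 * ln (6 / c))) \<longrightarrow>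
       (1 / real T) * (\<Sum>t<T. measure_pmf.expectation (sss_proc M n p B \<beta> \<eta> gradf sd Bsel byz w0 t)
                                  (\<lambda>h. l1norm (gradF (last h))))
       \<le> (1 / c) * ((F w0 - Fstar) * sqrt d / sqrt (real T) + L * sqrt d / (2 * sqrt (real T))
             + d / sqrt (2 * pi) * (B + \<beta>) * exp (- real n / 2) + 2 * d * c0 / sqrt (real M)
             + 6 * d * (B + \<beta>) * (\<Sum>t<T. real (\<tau> t)) / (real T * real M)))"
proof -
  have Bi_le: "Bi i \<le> B0" for i unfolding B0_def by (intro Max_ge) auto
  have B0pos: "B0 > 0" using Bi_le[of undefined] Bi_pos[of undefined] by linarith
  have sd_fin: "finite {sd m i | m i. m < M}"
  proof -
    have "{sd m i | m i. m < M} = (\<lambda>(m, i). sd m i) ` ({..<M} \<times> UNIV)" by auto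
    thus ?thesis by simp
  qed
  have sd_le: "sd m i \<le> \<sigma>" if "m < M" for m i
    unfolding sigma_def using that by (intro Max_ge sd_fin) auto
  have sig_lt: "\<sigma> < \<epsilon>0 * B0" using eps_gt B0pos by (simp add: field_simps)
  have gsd: "\<bar>gradf m w $ i\<bar> + sd m i < B" if "m < M" for m w i
  proof -
    have "\<bar>gradf m w $ i\<bar> \<le> B0" using Bi_bound[OF that, of w i] Bi_le[of i] by linarith
    moreover have "sd m i < \<epsilon>0 * B0" using sd_le[OF that, of i] sig_lt by linarith
    ultimately show ?thesis unfolding B_def by (simp add: algebra_simps)
  qed
  interpret S: sss_setting M n p B \<beta> \<eta> gradf sd Bsel byz \<tau>
    by unfold_locales (use M_pos n_pos p_range beta_pos sd_nonneg gsd Bsel_sub Bsel_card byz_sign in auto)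
  have Bpos: "B > 0" by (rule S.B_pos)
  define u where "u = B + \<beta>"
  have upos: "u > 0" using Bpos beta_pos by (simp add: u_def)
  define E1 where "E1 = u * exp (- real n / 2) / sqrt (2 * pi)"
  have E1nn: "E1 \<ge> 0" using upos by (simp add: E1_def)
  have bias: "\<bar>(B + \<beta>) * (2 * prob_one n B \<beta> (gradf m w $ i) (sd m i) - 1) - gradf m w $ i\<bar> \<le> E1 / (1 + c)"
    if m: "m < M" for m w i
  proof -
    have "\<bar>(B + \<beta>) * (2 * prob_one n B \<beta> (gradf m w $ i) (sd m i) - 1) - gradf m w $ i\<bar>
        \<le> sd m i / 2 * std_normal_density (sqrt (real n))"
      by (rule prob_one_facts(3)[OF n_pos sd_nonneg gsd[OF m] beta_pos])
    also have "std_normal_density (sqrt (real n)) = exp (- real n / 2) / sqrt (2 * pi)"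
      by (simp add: std_normal_density_def)
    also have "sd m i / 2 * (exp (- real n / 2) / sqrt (2 * pi)) \<le> u / 2 * (exp (- real n / 2) / sqrt (2 * pi))"
    proof -
      have "sd m i \<le> u" using gsd[OF m, of w i] beta_pos unfolding u_def by linarith
      thus ?thesis by (intro mult_right_mono) auto
    qed
    also have "\<dots> = E1 / 2" by (simp add: E1_def)
    also have "\<dots> \<le> E1 / (1 + c)" using E1nn c_range by (intro divide_left_mono) auto
    finally show ?thesis .
  qed
  have c0b: "c0 \<ge> (B + \<beta>) / p * sqrt (8 * ln (6 / (3 - 5 * c)))"
  proof -
    have "sqrt (8 * (B + \<beta>)\<^sup>2 / p\<^sup>2 * ln (6 / (3 - 5 * c))) = sqrt (((B + \<beta>) / p)\<^sup>2 * (8 * ln (6 / (3 - 5 * c))))"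
      by (simp add: power_divide field_simps)
    also have "\<dots> = (B + \<beta>) / p * sqrt (8 * ln (6 / (3 - 5 * c)))"
      using upos p_range unfolding u_def by (simp add: real_sqrt_mult)
    finally show ?thesis unfolding c0_def by simp
  qed
  have gradF_i: "gradF w $ i = (1 / real M) * (\<Sum>m<M. gradf m w $ i)" for w i
    by (simp add: gradF_def sum_component)
  have dpos: "d > 0" unfolding d_def by simp
  have Tp: "real T > 0" using T_pos by simp
  have eta_pos: "\<eta> > 0" unfolding eta_def using dpos Tp by simp
  define LHS where "LHS = (\<Sum>t<T. measure_pmf.expectation (sss_proc M n p B \<beta> \<eta> gradf sd Bsel byz w0 t)
                                  (\<lambda>h. l1norm (gradF (last h))))"
  have generic: "(1 / real T) * LHS \<le> (1 / c) * ((F w0 - Fstar) * sqrt d / sqrt (real T) + L * sqrt d / (2 * sqrt (real T))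
             + d / sqrt (2 * pi) * (B + \<beta>) * exp (- real n / 2) + 2 * d * c0 / sqrt (real M)
             + d * (\<Sum>t<T. K t) / real T)"
    if coordK: "\<And>t h i. measure_pmf.expectation (S.Qw (last h)) (\<lambda>q. gradF (last h) $ i * sgn (\<Sum>m\<in>S.Sq q. S.vq t h q m $ i))
                    \<ge> c * \<bar>gradF (last h) $ i\<bar> - (E1 + 2 * c0 / sqrt (real M) + K t)" for K :: "nat \<Rightarrow> real"
  proof -
    have step: "measure_pmf.expectation (sss_step M n p B \<beta> \<eta> gradf sd Bsel byz t h) (\<lambda>h'. F (last h'))
        \<le> F (last h) - (\<eta> * c) * l1norm (gradF (last h)) + (\<eta> * d * (E1 + 2 * c0 / sqrt (real M) + K t) + L / 2 * \<eta>\<^sup>2 * d)" for t h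
      using S.step_descent[OF smooth L_nonneg eta_pos coordK, of t h] unfolding d_def by simp
    have "(\<eta> * c) * LHS \<le> F w0 - Fstar + (\<Sum>t<T. \<eta> * d * (E1 + 2 * c0 / sqrt (real M) + K t) + L / 2 * \<eta>\<^sup>2 * d)"
      unfolding LHS_def by (rule S.telescope[where G = "\<lambda>w. l1norm (gradF w)", OF step lower])
    hence "(1 / real T) * LHS \<le> (1 / c) * ((F w0 - Fstar) * sqrt d / sqrt (real T) + L * sqrt d / (2 * sqrt (real T))
           + d * E1 + d * (2 * c0 / sqrt (real M)) + d * (\<Sum>t<T. K t) / real T)"
      by (intro final_alg[OF T_pos dpos c_range(1) eta_def]) simp
    moreover have e1: "d * E1 = d / sqrt (2 * pi) * (B + \<beta>) * exp (- real n / 2)" by (simp add: E1_def u_def)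
    moreover have e2: "d * (2 * c0 / sqrt (real M)) = 2 * d * c0 / sqrt (real M)" by simp
    ultimately show ?thesis by (simp only: e1 e2)
  qed
  have Ksum1: "d * (\<Sum>t<T. 4 * (B + \<beta>) * real (\<tau> t) / (p * real M)) / real T
      = 4 * d * (B + \<beta>) * (\<Sum>t<T. real (\<tau> t)) / (p * real T * real M)"
  proof -
    have "(\<Sum>t<T. 4 * (B + \<beta>) * real (\<tau> t) / (p * real M)) = 4 * (B + \<beta>) / (p * real M) * (\<Sum>t<T. real (\<tau> t))"
      unfolding sum_distrib_left by (intro sum.cong) simp_all
    thus ?thesis using M_pos T_pos p_range by (simp add: field_simps)
  qed
  have Ksum2: "d * (\<Sum>t<T. 6 * (B + \<beta>) * real (\<tau> t) / real M) / real T
      = 6 * d * (B + \<beta>) * (\<Sum>t<T. real (\<tau> t)) / (real T * real M)"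
  proof -
    have "(\<Sum>t<T. 6 * (B + \<beta>) * real (\<tau> t) / real M) = 6 * (B + \<beta>) / real M * (\<Sum>t<T. real (\<tau> t))"
      unfolding sum_distrib_left by (intro sum.cong) simp_all
    thus ?thesis using M_pos T_pos p_range by (simp add: field_simps)
  qed
  have part1: "(1 / real T) * LHS \<le> (1 / c) * ((F w0 - Fstar) * sqrt d / sqrt (real T) + L * sqrt d / (2 * sqrt (real T))
             + d / sqrt (2 * pi) * (B + \<beta>) * exp (- real n / 2) + 2 * d * c0 / sqrt (real M)
             + 4 * d * (B + \<beta>) * (\<Sum>t<T. real (\<tau> t)) / (p * real T * real M))"
  proof -
    have "(1 / real T) * LHS \<le> (1 / c) * ((F w0 - Fstar) * sqrt d / sqrt (real T) + L * sqrt d / (2 * sqrt (real T))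
             + d / sqrt (2 * pi) * (B + \<beta>) * exp (- real n / 2) + 2 * d * c0 / sqrt (real M)
             + d * (\<Sum>t<T. 4 * (B + \<beta>) * real (\<tau> t) / (p * real M)) / real T)"
    proof (rule generic)
      fix t h i
      show "measure_pmf.expectation (S.Qw (last h)) (\<lambda>q. gradF (last h) $ i * sgn (\<Sum>m\<in>S.Sq q. S.vq t h q m $ i))
          \<ge> c * \<bar>gradF (last h) $ i\<bar> - (E1 + 2 * c0 / sqrt (real M) + 4 * (B + \<beta>) * real (\<tau> t) / (p * real M))"
        unfolding gradF_i by (rule S.coord_adaptive[OF c_range c0b E1nn bias])
    qed
    thus ?thesis unfolding Ksum1 .
  qed
  have part2: "(1 / real T) * LHS \<le> (1 / c) * ((F w0 - Fstar) * sqrt d / sqrt (real T) + L * sqrt d / (2 * sqrt (real T))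
             + d / sqrt (2 * pi) * (B + \<beta>) * exp (- real n / 2) + 2 * d * c0 / sqrt (real M)
             + 6 * d * (B + \<beta>) * (\<Sum>t<T. real (\<tau> t)) / (real T * real M))" if na: "\<not> adaptive"
  proof -
    have stat: "Bsel t h S = Bsel t h {}" for t h S
      using static_if_not_adaptive[OF na] unfolding static_adv_def by blast
    have "(1 / real T) * LHS \<le> (1 / c) * ((F w0 - Fstar) * sqrt d / sqrt (real T) + L * sqrt d / (2 * sqrt (real T))
             + d / sqrt (2 * pi) * (B + \<beta>) * exp (- real n / 2) + 2 * d * c0 / sqrt (real M)
             + d * (\<Sum>t<T. 6 * (B + \<beta>) * real (\<tau> t) / real M) / real T)"
    proof (rule generic)
      fix t h i
      show "measure_pmf.expectation (S.Qw (last h)) (\<lambda>q. gradF (last h) $ i * sgn (\<Sum>m\<in>S.Sq q. S.vq t h q m $ i))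
          \<ge> c * \<bar>gradF (last h) $ i\<bar> - (E1 + 2 * c0 / sqrt (real M) + 6 * (B + \<beta>) * real (\<tau> t) / real M)"
        unfolding gradF_i by (rule S.coord_static[OF c_range c0b E1nn bias stat])
    qed
    thus ?thesis unfolding Ksum2 .
  qed
  show ?thesis using part1 part2 unfolding LHS_def by blast
qed


end
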